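(* Let $n\ge1$ and let $\gamma_{n,k}^S$ be the integers defined by $$\sum_{\pi\in\mathfrak{S}_n(2413,3142)}t^{\mathrm{des}(\pi)}=\sum_{k=0}^{\lfloor\frac{n-1}{2}\rfloor}\gamma_{n,k}^S\, t^k (1+t)^{n-1-2k}.$$ Then $$\gamma_{n,k}^S=\sum_{T\in\mathfrak{T}_n,\ r_{o}(T)=n-1-2k} 2^{r_{e}(T)}.$$
   Context: $\mathfrak{S}_n(2413,3142)$ is the set of permutations of $[n]$ avoiding the patterns $2413$ and $3142$; $\mathrm{des}(\pi)=\#\{i\in[n-1]:\pi_i>\pi_{i+1}\}$. A binary tree is either empty or consists of a root with a left and a right subtree, both binary trees; $\mathfrak{T}_n$ is the set of (unlabelled) binary trees with $n-1$ nodes. A right chain of a binary tree is a maximal sequence of nodes $v_1,\dots,v_l$ with $v_1$ the root or a left child and each $v_{j+1}$ the right child of $v_j$; $l$ is its length. $r_o(T)$ and $r_e(T)$ are the numbers of right chains of $T$ of odd and even length respectively. *)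

theory Defs
  imports Main "HOL-Library.Tree" "HOL-Computational_Algebra.Polynomial"
begin

definition perms :: "nat \<Rightarrow> nat list set" where
  "perms n = {\<pi>. distinct \<pi> \<and> set \<pi> = {1..n}}"

definition contains :: "nat list \<Rightarrow> nat list \<Rightarrow> bool" where
  "contains \<pi> \<sigma> \<longleftrightarrow> (\<exists>f::nat \<Rightarrow> nat.
      strict_mono_on {..<length \<sigma>} f \<and> (\<forall>a<length \<sigma>. f a < length \<pi>) \<and>
      (\<forall>a<length \<sigma>. \<forall>b<length \<sigma>. \<sigma> ! a < \<sigma> ! b \<longleftrightarrow> \<pi> ! f a < \<pi> ! f b))"

definition avoids :: "nat list \<Rightarrow> nat list \<Rightarrow> bool" where
  "avoids \<pi> \<sigma> \<longleftrightarrow> \<not> contains \<pi> \<sigma>"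

definition sep_perms :: "nat \<Rightarrow> nat list set" where
  "sep_perms n = {\<pi> \<in> perms n. avoids \<pi> [2,4,1,3] \<and> avoids \<pi> [3,1,4,2]}"

definition des :: "nat list \<Rightarrow> nat" where
  "des \<pi> = card {i. Suc i < length \<pi> \<and> \<pi> ! i > \<pi> ! Suc i}"

text \<open>Unlabelled binary trees are unit trees; T_n = trees with n-1 nodes.\<close>
definition btrees :: "nat \<Rightarrow> unit tree set" where
  "btrees n = {T. size T = n - 1}"

fun rlen :: "unit tree \<Rightarrow> nat" where
  "rlen Leaf = 0"
| "rlen (Node l x r) = Suc (rlen r)"

text \<open>The flag says whether the current node
  starts a chain (it is the root or a left child); a chain starting at v consists
  of v and its successive right children, hence has length rlen v.\<close>
fun chains :: "bool \<Rightarrow> unit tree \<Rightarrow> nat list" where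
  "chains b Leaf = []"
| "chains b (Node l x r) =
     (if b then [rlen (Node l x r)] else []) @ chains True l @ chains False r"

definition r_o :: "unit tree \<Rightarrow> nat" where
  "r_o T = length (filter odd (chains True T))"

definition r_e :: "unit tree \<Rightarrow> nat" where
  "r_e T = length (filter even (chains True T))"

end

theory Submission
  imports Defs "HOL-Computational_Algebra.Formal_Power_Series"
begin


lemma perms_length: "\<pi> \<in> perms n \<Longrightarrow> length \<pi> = n"
  unfolding perms_def using distinct_card by fastforce

lemma finite_perms: "finite (perms n)"
proof -
  have "perms n \<subseteq> {xs. set xs \<subseteq> {1..n} \<and> length xs = n}"
    using perms_length unfolding perms_def by auto
  moreover have "finite {xs. set xs \<subseteq> {1..n} \<and> length xs = n}"
    by (rule finite_lists_length_eq) simp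
  ultimately show ?thesis by (rule finite_subset)
qed

lemma finite_sep: "finite (sep_perms n)"
  using finite_perms unfolding sep_perms_def by auto

lemma contains_emb:
  assumes "strict_mono_on {..<length \<tau>} g" "\<forall>i<length \<tau>. g i < length \<pi>"
    "\<forall>i<length \<tau>. \<forall>j<length \<tau>. \<tau>!i < \<tau>!j \<longleftrightarrow> \<pi>!g i < \<pi>!g j"
    "contains \<tau> \<sigma>"
  shows "contains \<pi> \<sigma>"
proof -
  obtain f where f: "strict_mono_on {..<length \<sigma>} f" "\<forall>a<length \<sigma>. f a < length \<tau>"
    "\<forall>a<length \<sigma>. \<forall>b<length \<sigma>. \<sigma> ! a < \<sigma> ! b \<longleftrightarrow> \<tau> ! f a < \<tau> ! f b"
    using assms(4) unfolding contains_def by blast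
  show ?thesis unfolding contains_def
  proof (intro exI[of _ "g \<circ> f"] conjI allI impI)
    show "strict_mono_on {..<length \<sigma>} (g \<circ> f)"
      using f(1,2) assms(1) unfolding strict_mono_on_def by auto
    show "(g \<circ> f) a < length \<pi>" if "a < length \<sigma>" for a
      using that f(2) assms(2) by auto
    show "\<sigma> ! a < \<sigma> ! b \<longleftrightarrow> \<pi> ! (g \<circ> f) a < \<pi> ! (g \<circ> f) b"
      if "a < length \<sigma>" "b < length \<sigma>" for a b
      using that f(2,3) assms(3) by auto
  qed
qed

lemma all4: "(\<forall>a<(4::nat). P a) \<longleftrightarrow> P 0 \<and> P 1 \<and> P 2 \<and> P 3"
proof -
  have "a < (4::nat) \<longleftrightarrow> a = 0 \<or> a = 1 \<or> a = 2 \<or> a = 3" for a by auto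
  then show ?thesis by metis
qed

lemma contains4:
  assumes "i0 < i1" "i1 < i2" "i2 < i3" "i3 < length \<pi>" "length p = 4"
    "\<forall>a<4. \<forall>b<4. p!a < p!b \<longleftrightarrow> \<pi>!([i0,i1,i2,i3]!a) < \<pi>!([i0,i1,i2,i3]!b)"
  shows "contains \<pi> p"
  unfolding contains_def
proof (intro exI[of _ "\<lambda>a. [i0,i1,i2,i3]!a"] conjI allI impI)
  show "strict_mono_on {..<length p} (\<lambda>a. [i0,i1,i2,i3]!a)"
  proof (rule strict_mono_onI)
    fix r s assume "r \<in> {..<length p}" "s \<in> {..<length p}" "r < s"
    then have "r = 0 \<or> r = 1 \<or> r = 2 \<or> r = 3" "s = 0 \<or> s = 1 \<or> s = 2 \<or> s = 3" "r < s"
      using assms(5) by auto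
    then show "[i0,i1,i2,i3]!r < [i0,i1,i2,i3]!s"
      using assms(1-3) by (elim disjE) auto
  qed
  show "[i0,i1,i2,i3]!a < length \<pi>" if "a < length p" for a
  proof -
    have "\<forall>a<4. [i0,i1,i2,i3]!a < length \<pi>" unfolding all4 using assms(1-4) by simp
    then show ?thesis using that assms(5) by simp
  qed
  show "p ! a < p ! b \<longleftrightarrow> \<pi> ! ([i0,i1,i2,i3]!a) < \<pi> ! ([i0,i1,i2,i3]!b)"
    if "a < length p" "b < length p" for a b using that assms(5,6) by simp
qed

lemma contains_2413:
  assumes "i0 < i1" "i1 < i2" "i2 < i3" "i3 < length \<pi>"
    "\<pi>!i2 < \<pi>!i0" "\<pi>!i0 < \<pi>!i3" "\<pi>!i3 < \<pi>!i1"
  shows "contains \<pi> [2,4,1,3]"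
  apply (rule contains4[OF assms(1-4)])
   apply simp
  apply (simp only: all4)
  using assms(5-7) by simp

lemma contains_3142:
  assumes "i0 < i1" "i1 < i2" "i2 < i3" "i3 < length \<pi>"
    "\<pi>!i1 < \<pi>!i3" "\<pi>!i3 < \<pi>!i0" "\<pi>!i0 < \<pi>!i2"
  shows "contains \<pi> [3,1,4,2]"
  apply (rule contains4[OF assms(1-4)])
   apply simp
  apply (simp only: all4)
  using assms(5-7) by simp


lemma des_Nil[simp]: "des [] = 0" unfolding des_def by simp

lemma des_Cons: "des (x # xs) = des xs + (if xs \<noteq> [] \<and> hd xs < x then 1 else 0)"
proof -
  let ?S = "{i. Suc i < length xs \<and> xs ! Suc i < xs ! i}"
  have eq: "{i. Suc i < length (x#xs) \<and> (x#xs) ! Suc i < (x#xs) ! i}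
     = (if xs \<noteq> [] \<and> hd xs < x then {0} else {}) \<union> Suc ` ?S" (is "?L = ?R")
  proof (rule set_eqI)
    fix i show "i \<in> ?L \<longleftrightarrow> i \<in> ?R"
      by (cases i) (auto simp: hd_conv_nth)
  qed
  have fin: "finite ?S" by (rule finite_subset[of _ "{..<length xs}"]) auto
  have "card ?R = (if xs \<noteq> [] \<and> hd xs < x then 1 else 0) + card ?S"
    using fin by (simp add: card_image)
  then show ?thesis unfolding des_def eq by simp
qed

lemma des_append: "des (xs @ ys) = des xs + des ys + (if xs \<noteq> [] \<and> ys \<noteq> [] \<and> hd ys < last xs then 1 else 0)"
proof (induction xs)
  case Nil then show ?case by simp
next
  case (Cons x xs)
  show ?case
  proof (cases "xs = []")
    case True then show ?thesis by (simp add: des_Cons)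
  next
    case False
    then show ?thesis using Cons by (simp add: des_Cons)
  qed
qed

lemma des_map_add: "des (map (\<lambda>x. x + c) xs) = des xs"
  unfolding des_def by (rule arg_cong[where f=card]) auto

definition dsum :: "nat list \<Rightarrow> nat list \<Rightarrow> nat list" where
  "dsum \<sigma> \<tau> = \<sigma> @ map (\<lambda>x. x + length \<sigma>) \<tau>"

definition ssum :: "nat list \<Rightarrow> nat list \<Rightarrow> nat list" where
  "ssum \<sigma> \<tau> = map (\<lambda>x. x + length \<tau>) \<sigma> @ \<tau>"

lemma set_perms: "\<pi> \<in> perms n \<Longrightarrow> set \<pi> = {1..n}" unfolding perms_def by simp

lemma perms_nonempty: "\<pi> \<in> perms n \<Longrightarrow> n \<ge> 1 \<Longrightarrow> \<pi> \<noteq> []"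
  using perms_length by fastforce

lemma dsum_perms:
  assumes "\<sigma> \<in> perms a" "\<tau> \<in> perms b" shows "dsum \<sigma> \<tau> \<in> perms (a + b)"
proof -
  have l: "length \<sigma> = a" using assms perms_length by auto
  have s1: "set \<sigma> = {1..a}" "set \<tau> = {1..b}" "distinct \<sigma>" "distinct \<tau>"
    using assms unfolding perms_def by auto
  have im: "(\<lambda>x. x + a) ` {1..b} = {1+a..b+a}"
    by (rule image_add_atLeastAtMost')
  have "set (dsum \<sigma> \<tau>) = {1..a} \<union> {1+a..b+a}" unfolding dsum_def l using s1 im by simp
  also have "\<dots> = {1..a+b}" by auto
  finally have "set (dsum \<sigma> \<tau>) = {1..a+b}" .
  moreover have "distinct (dsum \<sigma> \<tau>)" unfolding dsum_def l using s1 im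
    by (auto simp: distinct_map inj_on_def)
  ultimately show ?thesis unfolding perms_def by simp
qed

lemma ssum_perms:
  assumes "\<sigma> \<in> perms a" "\<tau> \<in> perms b" shows "ssum \<sigma> \<tau> \<in> perms (a + b)"
proof -
  have l: "length \<tau> = b" using assms perms_length by auto
  have s1: "set \<sigma> = {1..a}" "set \<tau> = {1..b}" "distinct \<sigma>" "distinct \<tau>"
    using assms unfolding perms_def by auto
  have im: "(\<lambda>x. x + b) ` {1..a} = {b+1..a+b}"
    by (simp add: image_add_atLeastAtMost[symmetric] add.commute)
  have "set (ssum \<sigma> \<tau>) = {1+b..a+b} \<union> {1..b}" unfolding ssum_def l using s1 im by simp
  also have "\<dots> = {1..a+b}" by auto
  finally have "set (ssum \<sigma> \<tau>) = {1..a+b}" .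
  moreover have "distinct (ssum \<sigma> \<tau>)" unfolding ssum_def l using s1 im
    by (auto simp: distinct_map inj_on_def)
  ultimately show ?thesis unfolding perms_def by simp
qed

lemma des_dsum:
  assumes "\<sigma> \<in> perms a" "\<tau> \<in> perms b" "a \<ge> 1" "b \<ge> 1"
  shows "des (dsum \<sigma> \<tau>) = des \<sigma> + des \<tau>"
proof -
  have ne: "\<sigma> \<noteq> []" "\<tau> \<noteq> []" using assms perms_nonempty by auto
  have l: "length \<sigma> = a" using assms perms_length by auto
  have "last \<sigma> \<in> {1..a}" using ne set_perms[OF assms(1)] last_in_set by metis
  moreover have "hd \<tau> \<in> {1..b}" using ne set_perms[OF assms(2)] hd_in_set by metis
  ultimately show ?thesis unfolding dsum_def using ne l
    by (simp add: des_append des_map_add hd_map)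
qed

lemma des_ssum:
  assumes "\<sigma> \<in> perms a" "\<tau> \<in> perms b" "a \<ge> 1" "b \<ge> 1"
  shows "des (ssum \<sigma> \<tau>) = des \<sigma> + des \<tau> + 1"
proof -
  have ne: "\<sigma> \<noteq> []" "\<tau> \<noteq> []" using assms perms_nonempty by auto
  have l: "length \<tau> = b" using assms perms_length by auto
  have "last \<sigma> \<in> {1..a}" using ne set_perms[OF assms(1)] last_in_set by metis
  moreover have "hd \<tau> \<in> {1..b}" using ne set_perms[OF assms(2)] hd_in_set by metis
  ultimately show ?thesis unfolding ssum_def using ne l
    by (simp add: des_append des_map_add last_map)
qed

lemma mono4: "strict_mono_on {..<4} f \<Longrightarrow> f 0 < f 1 \<and> f 1 < f 2 \<and> f (2::nat) < (f 3 :: nat)"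
  unfolding strict_mono_on_def by auto

lemma contains_map_add: "contains (map (\<lambda>x. x + c) \<tau>) p \<Longrightarrow> contains \<tau> p"
  unfolding contains_def by auto

lemma contains_cut:
  assumes "contains (xs @ ys) p" "length p = 4"
  shows "contains xs p \<or> contains ys p \<or> (\<exists>f. strict_mono_on {..<4} f \<and> f 0 < length xs \<and>
     length xs \<le> f 3 \<and> f 3 < length xs + length ys \<and>
     (\<forall>i<4. \<forall>j<4. p!i < p!j \<longleftrightarrow> (xs@ys)!f i < (xs@ys)!f j))"
proof -
  obtain f where f: "strict_mono_on {..<4} f" "\<forall>a<4. f a < length (xs @ ys)"
    "\<forall>a<4. \<forall>b<4. p ! a < p ! b \<longleftrightarrow> (xs@ys) ! f a < (xs@ys) ! f b"
    using assms unfolding contains_def by auto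
  have m: "f 0 < f 1" "f 1 < f 2" "f 2 < f 3" using mono4[OF f(1)] by auto
  have le3: "a < 4 \<Longrightarrow> f a \<le> f 3" for a
    using f(1) by (cases "a = 3") (auto simp: strict_mono_on_def intro: less_imp_le)
  have ge0: "a < 4 \<Longrightarrow> f 0 \<le> f a" for a
    using f(1) by (cases "a = 0") (auto simp: strict_mono_on_def intro: less_imp_le)
  consider "f 3 < length xs" | "length xs \<le> f 0" | "f 0 < length xs" "length xs \<le> f 3" by linarith
  then show ?thesis
  proof cases
    case 1
    have "contains xs p" unfolding contains_def assms(2)
    proof (intro exI[of _ f] conjI allI impI)
      show "strict_mono_on {..<4} f" by fact
      show "f a < length xs" if "a < 4" for a using le3[OF that] 1 by simp
      show "p ! a < p ! b \<longleftrightarrow> xs ! f a < xs ! f b" if "a < 4" "b < 4" for a b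
      proof -
        have "f a < length xs" "f b < length xs" using le3 that 1 by (meson le_less_trans)+
        then show ?thesis using f(3) that by (simp add: nth_append)
      qed
    qed
    then show ?thesis by simp
  next
    case 2
    have "contains ys p" unfolding contains_def assms(2)
    proof (intro exI[of _ "\<lambda>a. f a - length xs"] conjI allI impI)
      show "strict_mono_on {..<4} (\<lambda>a. f a - length xs)"
        using f(1) ge0 2 unfolding strict_mono_on_def
        by (metis diff_less_mono le_trans lessThan_iff)
      show "f a - length xs < length ys" if "a < 4" for a using f(2) that ge0[OF that] 2 by auto
      show "p ! a < p ! b \<longleftrightarrow> ys ! (f a - length xs) < ys ! (f b - length xs)" if "a < 4" "b < 4" for a b
      proof -
        have "\<not> f a < length xs" "\<not> f b < length xs" using ge0 that 2 by (meson le_trans not_less)+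
        then show ?thesis using f(3) that by (simp add: nth_append)
      qed
    qed
    then show ?thesis by simp
  next
    case 3
    then show ?thesis using f m by auto
  qed
qed


definition pats :: "nat list set" where "pats = {[2,4,1,3], [3,1,4,2]}"

lemma le3: "strict_mono_on {..<4} (f::nat\<Rightarrow>nat) \<Longrightarrow> j < 4 \<Longrightarrow> (f j::nat) \<le> f 3"
proof -
  assume a: "strict_mono_on {..<4} f" "j < 4"
  then have "j = 0 \<or> j = 1 \<or> j = 2 \<or> j = 3" by auto
  then show ?thesis using mono4[OF a(1)] by auto
qed

lemma dsum_avoid:
  assumes "\<sigma> \<in> perms a" "\<tau> \<in> perms b" "avoids \<sigma> p" "avoids \<tau> p" "p \<in> pats"
  shows "avoids (dsum \<sigma> \<tau>) p"
  unfolding avoids_def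
proof
  assume c: "contains (dsum \<sigma> \<tau>) p"
  have lp: "length p = 4" using assms(5) unfolding pats_def by auto
  have la: "length \<sigma> = a" "length \<tau> = b" using assms perms_length by auto
  let ?ys = "map (\<lambda>x. x + a) \<tau>"
  from contains_cut[of \<sigma> ?ys p] c lp la
  have "contains \<sigma> p \<or> contains ?ys p \<or> (\<exists>f. strict_mono_on {..<4} f \<and> f 0 < a \<and>
     a \<le> f 3 \<and> f 3 < a + b \<and> (\<forall>i<4. \<forall>j<4. p!i < p!j \<longleftrightarrow> (\<sigma>@?ys)!f i < (\<sigma>@?ys)!f j))"
    unfolding dsum_def by simp
  moreover have "\<not> contains ?ys p" using contains_map_add assms(4) unfolding avoids_def by blast
  ultimately obtain f where f: "strict_mono_on {..<4} f" "f 0 < a" "a \<le> f 3" "f 3 < a + b"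
    "\<forall>i<4. \<forall>j<4. p!i < p!j \<longleftrightarrow> (\<sigma>@?ys)!f i < (\<sigma>@?ys)!f j"
    using assms(3) unfolding avoids_def by blast
  have key: "p!i < p!j" if "i < 4" "j < 4" "f i < a" "a \<le> f j" for i j
  proof -
    have fj: "f j - a < b" using le3[OF f(1) that(2)] f(4) that(4) by linarith
    have "\<sigma> ! f i \<in> {1..a}" using set_perms[OF assms(1)] la that(3) nth_mem by metis
    moreover have "\<tau> ! (f j - a) \<in> {1..b}" using set_perms[OF assms(2)] la fj nth_mem by metis
    ultimately have "(\<sigma>@?ys)!f i < (\<sigma>@?ys)!f j" using that la fj by (simp add: nth_append)
    then show ?thesis using f(5) that by blast
  qed
  have m: "f 0 < f 1" "f 1 < f 2" "f 2 < f 3" using mono4[OF f(1)] by auto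
  have k01: "\<not> (f 0 < a \<and> a \<le> f 1) \<or> p!0 < p!1" using key[of 0 1] by auto
  have k02: "\<not> (f 0 < a \<and> a \<le> f 2) \<or> p!0 < p!2" using key[of 0 2] by auto
  have k03: "\<not> (f 0 < a \<and> a \<le> f 3) \<or> p!0 < p!3" using key[of 0 3] by auto
  have k12: "\<not> (f 1 < a \<and> a \<le> f 2) \<or> p!1 < p!2" using key[of 1 2] by auto
  have k13: "\<not> (f 1 < a \<and> a \<le> f 3) \<or> p!1 < p!3" using key[of 1 3] by auto
  have k23: "\<not> (f 2 < a \<and> a \<le> f 3) \<or> p!2 < p!3" using key[of 2 3] by auto
  show False
  proof (cases "p = [2,4,1,3]")
    case True
    then show False using k02 k12 k13 m f(2,3) by (simp; presburger)
  next
    case False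
    then have "p = [3,1,4,2]" using assms(5) unfolding pats_def by auto
    then show False using k01 k03 k23 m f(2,3) by (simp; presburger)
  qed
qed

lemma ssum_avoid:
  assumes "\<sigma> \<in> perms a" "\<tau> \<in> perms b" "avoids \<sigma> p" "avoids \<tau> p" "p \<in> pats"
  shows "avoids (ssum \<sigma> \<tau>) p"
  unfolding avoids_def
proof
  assume c: "contains (ssum \<sigma> \<tau>) p"
  have lp: "length p = 4" using assms(5) unfolding pats_def by auto
  have la: "length \<sigma> = a" "length \<tau> = b" using assms perms_length by auto
  let ?xs = "map (\<lambda>x. x + b) \<sigma>"
  from contains_cut[of ?xs \<tau> p] c lp la
  have "contains ?xs p \<or> contains \<tau> p \<or> (\<exists>f. strict_mono_on {..<4} f \<and> f 0 < a \<and>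
     a \<le> f 3 \<and> f 3 < a + b \<and> (\<forall>i<4. \<forall>j<4. p!i < p!j \<longleftrightarrow> (?xs@\<tau>)!f i < (?xs@\<tau>)!f j))"
    unfolding ssum_def by simp
  moreover have "\<not> contains ?xs p" using contains_map_add assms(3) unfolding avoids_def by blast
  ultimately obtain f where f: "strict_mono_on {..<4} f" "f 0 < a" "a \<le> f 3" "f 3 < a + b"
    "\<forall>i<4. \<forall>j<4. p!i < p!j \<longleftrightarrow> (?xs@\<tau>)!f i < (?xs@\<tau>)!f j"
    using assms(4) unfolding avoids_def by blast
  have key: "p!j < p!i" if "i < 4" "j < 4" "f i < a" "a \<le> f j" for i j
  proof -
    have fj: "f j - a < b" using le3[OF f(1) that(2)] f(4) that(4) by linarith
    have "\<sigma> ! f i \<in> {1..a}" using set_perms[OF assms(1)] la that(3) nth_mem by metis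
    moreover have "\<tau> ! (f j - a) \<in> {1..b}" using set_perms[OF assms(2)] la fj nth_mem by metis
    ultimately have "(?xs@\<tau>)!f j < (?xs@\<tau>)!f i" using that la fj by (simp add: nth_append)
    then show ?thesis using f(5) that by blast
  qed
  have m: "f 0 < f 1" "f 1 < f 2" "f 2 < f 3" using mono4[OF f(1)] by auto
  have k01: "\<not> (f 0 < a \<and> a \<le> f 1) \<or> p!1 < p!0" using key[of 0 1] by auto
  have k02: "\<not> (f 0 < a \<and> a \<le> f 2) \<or> p!2 < p!0" using key[of 0 2] by auto
  have k03: "\<not> (f 0 < a \<and> a \<le> f 3) \<or> p!3 < p!0" using key[of 0 3] by auto
  have k12: "\<not> (f 1 < a \<and> a \<le> f 2) \<or> p!2 < p!1" using key[of 1 2] by auto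
  have k13: "\<not> (f 1 < a \<and> a \<le> f 3) \<or> p!3 < p!1" using key[of 1 3] by auto
  have k23: "\<not> (f 2 < a \<and> a \<le> f 3) \<or> p!3 < p!2" using key[of 2 3] by auto
  show False
  proof (cases "p = [2,4,1,3]")
    case True
    then show False using k01 k03 k23 m f(2,3) by (simp; presburger)
  next
    case False
    then have "p = [3,1,4,2]" using assms(5) unfolding pats_def by auto
    then show False using k02 k12 k13 m f(2,3) by (simp; presburger)
  qed
qed

lemma contains_take_sub:
  assumes "contains (map (\<lambda>x. x - c) (take k \<pi>)) p" "\<forall>x\<in>set (take k \<pi>). c \<le> x"
  shows "contains \<pi> p"
proof (rule contains_emb[OF _ _ _ assms(1), of id])
  show "strict_mono_on {..<length (map (\<lambda>x. x - c) (take k \<pi>))} id" by (simp add: strict_mono_on_def)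
  show "\<forall>i<length (map (\<lambda>x. x - c) (take k \<pi>)). id i < length \<pi>" by simp
  show "\<forall>i<length (map (\<lambda>x. x - c) (take k \<pi>)). \<forall>j<length (map (\<lambda>x. x - c) (take k \<pi>)).
     (map (\<lambda>x. x - c) (take k \<pi>) ! i < map (\<lambda>x. x - c) (take k \<pi>) ! j) = (\<pi> ! id i < \<pi> ! id j)"
  proof (intro allI impI)
    fix i j assume ij: "i < length (map (\<lambda>x. x - c) (take k \<pi>))" "j < length (map (\<lambda>x. x - c) (take k \<pi>))"
    have "take k \<pi> ! i \<in> set (take k \<pi>)" "take k \<pi> ! j \<in> set (take k \<pi>)"
      using ij nth_mem[of i "take k \<pi>"] nth_mem[of j "take k \<pi>"] by (simp_all del: nth_take)
    then have "c \<le> \<pi> ! i" "c \<le> \<pi> ! j" using assms(2) ij by auto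
    then show "(map (\<lambda>x. x - c) (take k \<pi>) ! i < map (\<lambda>x. x - c) (take k \<pi>) ! j) = (\<pi> ! id i < \<pi> ! id j)"
      using ij by auto
  qed
qed

lemma contains_drop_sub:
  assumes "contains (map (\<lambda>x. x - c) (drop k \<pi>)) p" "\<forall>x\<in>set (drop k \<pi>). c \<le> x"
  shows "contains \<pi> p"
proof (rule contains_emb[OF _ _ _ assms(1), of "\<lambda>i. k + i"])
  show "strict_mono_on {..<length (map (\<lambda>x. x - c) (drop k \<pi>))} (\<lambda>i. k + i)" by (simp add: strict_mono_on_def)
  show "\<forall>i<length (map (\<lambda>x. x - c) (drop k \<pi>)). k + i < length \<pi>" by auto
  show "\<forall>i<length (map (\<lambda>x. x - c) (drop k \<pi>)). \<forall>j<length (map (\<lambda>x. x - c) (drop k \<pi>)).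
     (map (\<lambda>x. x - c) (drop k \<pi>) ! i < map (\<lambda>x. x - c) (drop k \<pi>) ! j) = (\<pi> ! (k + i) < \<pi> ! (k + j))"
  proof (intro allI impI)
    fix i j assume ij: "i < length (map (\<lambda>x. x - c) (drop k \<pi>))" "j < length (map (\<lambda>x. x - c) (drop k \<pi>))"
    have "drop k \<pi> ! i \<in> set (drop k \<pi>)" "drop k \<pi> ! j \<in> set (drop k \<pi>)"
      using ij nth_mem[of i "drop k \<pi>"] nth_mem[of j "drop k \<pi>"] by (simp_all del: nth_drop)
    then have "c \<le> \<pi> ! (k + i)" "c \<le> \<pi> ! (k + j)" using assms(2) ij by auto
    then show "(map (\<lambda>x. x - c) (drop k \<pi>) ! i < map (\<lambda>x. x - c) (drop k \<pi>) ! j) = (\<pi> ! (k + i) < \<pi> ! (k + j))"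
      using ij by auto
  qed
qed

lemma contains_remove:
  assumes "q < length \<pi>" "contains (take q \<pi> @ drop (Suc q) \<pi>) p"
  shows "contains \<pi> p"
proof (rule contains_emb[OF _ _ _ assms(2), of "\<lambda>i. if i < q then i else Suc i"])
  have l: "length (take q \<pi> @ drop (Suc q) \<pi>) = length \<pi> - 1" using assms by simp
  have nth: "(take q \<pi> @ drop (Suc q) \<pi>) ! i = \<pi> ! (if i < q then i else Suc i)" if "i < length \<pi> - 1" for i
    using that assms(1) by (auto simp: nth_append min_def)
  show "strict_mono_on {..<length (take q \<pi> @ drop (Suc q) \<pi>)} (\<lambda>i. if i < q then i else Suc i)"
    by (auto simp: strict_mono_on_def)
  show "\<forall>i<length (take q \<pi> @ drop (Suc q) \<pi>). (if i < q then i else Suc i) < length \<pi>"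
    using l assms by auto
  show "\<forall>i<length (take q \<pi> @ drop (Suc q) \<pi>). \<forall>j<length (take q \<pi> @ drop (Suc q) \<pi>).
     ((take q \<pi> @ drop (Suc q) \<pi>) ! i < (take q \<pi> @ drop (Suc q) \<pi>) ! j) =
     (\<pi> ! (if i < q then i else Suc i) < \<pi> ! (if j < q then j else Suc j))"
    using nth l by simp
qed


definition dec_p :: "nat list \<Rightarrow> bool" where
  "dec_p \<pi> \<longleftrightarrow> (\<exists>k. 0 < k \<and> k < length \<pi> \<and> set (take k \<pi>) = {1..k})"

definition dec_s :: "nat list \<Rightarrow> bool" where
  "dec_s \<pi> \<longleftrightarrow> (\<exists>k. 0 < k \<and> k < length \<pi> \<and> set (take k \<pi>) = {length \<pi> - k + 1..length \<pi>})"

lemma low_part: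
  assumes "S1 \<union> S2 = {1..k}" "S1 \<inter> S2 = {}" "card S1 = p" "\<forall>x\<in>S1. \<forall>y\<in>S2. x < y"
  shows "S1 = {1..p}"
proof -
  have "finite (S1 \<union> S2)" using assms(1) by simp
  then have fin: "finite S1" "finite S2" by simp_all
  have cs: "card S1 + card S2 = k" using card_Un_disjoint[OF fin assms(2)] assms(1) by simp
  have sub: "S1 \<subseteq> {1..p}"
  proof
    fix x assume x: "x \<in> S1"
    then have xk: "x \<in> {1..k}" using assms(1) by blast
    have "S2 \<subseteq> {x+1..k}"
    proof
      fix y assume y: "y \<in> S2"
      then have "y \<in> {1..k}" using assms(1) by blast
      moreover have "x < y" using assms(4) x y by blast
      ultimately show "y \<in> {x+1..k}" by simp
    qed
    then have "card S2 \<le> card {x+1..k}" by (intro card_mono) simp_all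
    then have "card S2 \<le> k - x" by simp
    moreover have "1 \<le> x" "x \<le> k" using xk by auto
    ultimately have "x \<le> p" using cs assms(3) by linarith
    then show "x \<in> {1..p}" using xk by simp
  qed
  have "card S1 = card {1..p}" using assms(3) by simp
  then show ?thesis using card_subset_eq[OF _ sub] by simp
qed

lemma in_take_iff: "distinct P \<Longrightarrow> m < length P \<Longrightarrow> (P!m \<in> set (take k P)) \<longleftrightarrow> m < k"
proof
  assume d: "distinct P" "m < length P" and "P!m \<in> set (take k P)"
  then obtain i where i: "i < length (take k P)" "take k P ! i = P ! m" by (auto simp: in_set_conv_nth)
  then have "P ! i = P ! m" "i < k" "i < length P" by auto
  then show "m < k" using d nth_eq_iff_index_eq[of P i m] by auto
next
  assume "distinct P" "m < length P" "m < k"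
  then show "P!m \<in> set (take k P)" using nth_mem[of m "take k P"] by (simp del: nth_mem)
qed

lemma nth_ins1: "m < length xs \<Longrightarrow> (xs @ N # ys)!m = (xs@ys)!m"
  by (simp add: nth_append)
lemma nth_ins2: "length xs \<le> m \<Longrightarrow> (xs @ N # ys)!(Suc m) = (xs@ys)!m"
  by (simp add: nth_append Suc_diff_le)
lemma nth_ins3: "(xs @ N # ys)!(length xs) = N"
  by (simp add: nth_append)

lemma perms_two: "\<pi> \<in> perms 2 \<Longrightarrow> \<pi> = [1,2] \<or> \<pi> = [2,1]"
proof -
  assume a: "\<pi> \<in> perms 2"
  then have "length \<pi> = 2" using perms_length by auto
  then obtain x y where xy: "\<pi> = [x,y]"
    by (metis One_nat_def Suc_1 length_0_conv length_Suc_conv)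
  have d: "x \<noteq> y" and s: "{x,y} = {1..2}" using a xy unfolding perms_def by simp_all
  have "x \<in> {1..2}" "y \<in> {1..2}" using s by blast+
  then have "x = 1 \<or> x = 2" "y = 1 \<or> y = 2" by auto
  then show ?thesis using xy d by auto
qed



lemma top_ins: "k \<le> n \<Longrightarrow> {Suc n - Suc k + 1..Suc n} = insert (Suc n) {n-k+1..n}"
  by (simp add: atLeastAtMostSuc_conv)

lemma sep_dec:
  assumes "2 \<le> n" shows "\<forall>\<pi>\<in>sep_perms n. dec_p \<pi> \<or> dec_s \<pi>"
  using assms
proof (induction n rule: nat_induct_at_least)
  case base
  show ?case
  proof
    fix \<pi> assume "\<pi> \<in> sep_perms 2"
    then have "\<pi> = [1,2] \<or> \<pi> = [2,1]" using perms_two unfolding sep_perms_def by auto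
    then show "dec_p \<pi> \<or> dec_s \<pi>"
    proof
      assume "\<pi> = [1,2]" then have "dec_p \<pi>" unfolding dec_p_def by (intro exI[of _ 1]) auto
      then show ?thesis by simp
    next
      assume "\<pi> = [2,1]" then have "dec_s \<pi>" unfolding dec_s_def by (intro exI[of _ 1]) auto
      then show ?thesis by simp
    qed
  qed
next
  case (Suc n)
  show ?case
  proof
    fix \<pi> assume pi: "\<pi> \<in> sep_perms (Suc n)"
    define N where "N = Suc n"
    have pperm: "\<pi> \<in> perms N" and av: "avoids \<pi> [2,4,1,3]" "avoids \<pi> [3,1,4,2]"
      using pi unfolding sep_perms_def N_def by auto
    have "N \<in> set \<pi>" using pperm N_def unfolding perms_def by auto
    then obtain xs ys where pxy: "\<pi> = xs @ N # ys" by (meson split_list)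
    define P where "P = xs @ ys"
    define q where "q = length xs"
    have lpi: "length \<pi> = N" using pperm perms_length by auto
    have dpi: "distinct \<pi>" and spi: "set \<pi> = {1..N}" using pperm unfolding perms_def by auto
    have dP: "distinct P" using dpi pxy P_def by auto
    have NP: "N \<notin> set P" using dpi pxy P_def by auto
    have sP: "set P = {1..n}"
    proof -
      have "set \<pi> = insert N (set P)" using pxy P_def by auto
      moreover have "{1..N} = insert N {1..n}" by (simp add: N_def atLeastAtMostSuc_conv)
      moreover have "N \<notin> {1..n}" using N_def by simp
      ultimately show ?thesis using spi NP by (metis insert_ident)
    qed
    have lP: "length P = n" using lpi pxy P_def N_def by simp
    have Pperm: "P \<in> perms n" using dP sP unfolding perms_def by simp
    have Pq: "q \<le> n" using lP P_def q_def by simp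
    have Pav: "avoids P [2,4,1,3]" "avoids P [3,1,4,2]"
    proof -
      have qpi: "q < length \<pi>" "take q \<pi> @ drop (Suc q) \<pi> = P" using pxy P_def q_def by auto
      show "avoids P [2,4,1,3]" "avoids P [3,1,4,2]"
        using av contains_remove[OF qpi(1)] qpi(2) unfolding avoids_def by metis+
    qed
    have "P \<in> sep_perms n" using Pperm Pav unfolding sep_perms_def by simp
    then have IH: "dec_p P \<or> dec_s P" using Suc.IH by blast
    have n1: "m < q \<Longrightarrow> \<pi>!m = P!m" for m using nth_ins1 pxy P_def q_def by metis
    have n2: "q \<le> m \<Longrightarrow> \<pi>!(Suc m) = P!m" for m using nth_ins2 pxy P_def q_def by metis
    have n3: "\<pi>!q = N" using nth_ins3 pxy q_def by metis
    have Pval: "m < n \<Longrightarrow> P!m \<in> {1..n}" for m using sP lP nth_mem by metis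
    from IH show "dec_p \<pi> \<or> dec_s \<pi>"
    proof
      assume "dec_p P"
      then obtain k where k: "0 < k" "k < n" "set (take k P) = {1..k}" unfolding dec_p_def lP by auto
      consider "k \<le> q" | "q = 0" | "0 < q" "q < k" by linarith
      then show ?thesis
      proof cases
        case 1
        have "take k \<pi> = take k P" using pxy P_def q_def 1 by simp
        then have "dec_p \<pi>" unfolding dec_p_def using k lpi N_def by (intro exI[of _ k]) auto
        then show ?thesis by simp
      next
        case 2
        then have "take 1 \<pi> = [N]" using pxy q_def by simp
        then have "dec_s \<pi>" unfolding dec_s_def using lpi N_def Suc.hyps by (intro exI[of _ 1]) auto
        then show ?thesis by simp
      next
        case 3
        show ?thesis
        proof (cases "\<exists>i j. i < q \<and> q \<le> j \<and> j < k \<and> P!j < P!i")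
          case True
          then obtain i j where ij: "i < q" "q \<le> j" "j < k" "P!j < P!i" by auto
          have a1: "P!i \<le> k" using in_take_iff[OF dP, of i k] k(3) ij lP 3 k(2) by auto
          have a2: "k < P!k"
          proof -
            have "P!k \<notin> set (take k P)" using in_take_iff[OF dP, of k k] lP k(2) by auto
            then show ?thesis using k(3) Pval[OF k(2)] by auto
          qed
          have a3: "P!k < N" using Pval[OF k(2)] N_def by auto
          have "contains \<pi> [2,4,1,3]"
          proof (rule contains_2413[of i q "Suc j" "Suc k"])
            show "i < q" "q < Suc j" "Suc j < Suc k" "Suc k < length \<pi>" using ij k lpi N_def by auto
            show "\<pi> ! Suc j < \<pi> ! i" "\<pi> ! i < \<pi> ! Suc k" "\<pi> ! Suc k < \<pi> ! q"
              using n1[of i] n2[of j] n2[of k] n3 ij 3 a1 a2 a3 by auto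
          qed
          then show ?thesis using av unfolding avoids_def by simp
        next
          case False
          have lt: "P!i < P!j" if "i < q" "q \<le> j" "j < k" for i j
          proof -
            have "P!i \<noteq> P!j" using nth_eq_iff_index_eq[OF dP, of i j] that lP k(2) 3 by auto
            moreover have "\<not> P!j < P!i" using False that by blast
            ultimately show ?thesis by linarith
          qed
          let ?S1 = "set (take q P)" and ?S2 = "set (drop q (take k P))"
          have tk: "take k P = take q P @ drop q (take k P)" using 3
            by (metis append_take_drop_id less_imp_le_nat min.absorb1 take_take)
          have u: "?S1 \<union> ?S2 = {1..k}" using k(3) tk by (metis set_append)
          have d: "?S1 \<inter> ?S2 = {}" using dP tk by (metis distinct_append distinct_take)
          have c: "card ?S1 = q" using dP Pq lP by (simp add: distinct_card)
          have o: "\<forall>x\<in>?S1. \<forall>y\<in>?S2. x < y"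
          proof (intro ballI)
            fix x y assume "x \<in> ?S1" "y \<in> ?S2"
            then obtain i j where "i < q" "x = P!i" "j < length (drop q (take k P))" "y = drop q (take k P) ! j"
              using Pq lP by (auto simp: in_set_conv_nth)
            then show "x < y" using lt[of i "q + j"] lP k(2) 3 by auto
          qed
          have "?S1 = {1..q}" using low_part[OF u d c o] .
          moreover have "take q \<pi> = take q P" using pxy P_def q_def by simp
          ultimately have "dec_p \<pi>" unfolding dec_p_def using 3 lpi N_def k by (intro exI[of _ q]) auto
          then show ?thesis by simp
        qed
      qed
    next
      assume "dec_s P"
      then obtain k where k: "0 < k" "k < n" "set (take k P) = {n-k+1..n}" unfolding dec_s_def lP by auto
      consider "q \<le> k" | "q = n" | "k < q" "q < n" using Pq by linarith
      then show ?thesis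
      proof cases
        case 1
        have e1: "take (Suc k) \<pi> = xs @ N # take (k - q) ys" using pxy q_def 1 by (simp add: Suc_diff_le)
        have e2: "take k P = xs @ take (k - q) ys" using P_def q_def 1 by simp
        have "set (take (Suc k) \<pi>) = insert N (set (take k P))" unfolding e1 e2 by auto
        also have "\<dots> = insert N {n-k+1..n}" using k(3) by simp
        also have "\<dots> = {N - Suc k + 1..N}" using N_def k by (simp add: atLeastAtMostSuc_conv)
        finally have "dec_s \<pi>" unfolding dec_s_def lpi using k N_def by (intro exI[of _ "Suc k"]) simp
        then show ?thesis by simp
      next
        case 2
        then have "take n \<pi> = P" using pxy P_def q_def lP by simp
        then have "dec_p \<pi>" unfolding dec_p_def using lpi N_def sP Suc.hyps by (intro exI[of _ n]) auto
        then show ?thesis by simp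
      next
        case 3
        have small: "j < n \<Longrightarrow> k \<le> j \<Longrightarrow> P!j \<le> n - k" for j
        proof -
          assume j: "j < n" "k \<le> j"
          have "P!j \<notin> set (take k P)" using in_take_iff[OF dP, of j k] lP j by auto
          then show ?thesis using k(3) Pval[OF j(1)] by auto
        qed
        have big: "j < k \<Longrightarrow> n - k < P!j" for j
        proof -
          assume j: "j < k"
          have "P!j \<in> set (take k P)" using in_take_iff[OF dP, of j k] lP j k by auto
          then show ?thesis using k(3) by auto
        qed
        show ?thesis
        proof (cases "\<exists>i j. k \<le> i \<and> i < q \<and> q \<le> j \<and> j < n \<and> P!i < P!j")
          case True
          then obtain i j where ij: "k \<le> i" "i < q" "q \<le> j" "j < n" "P!i < P!j" by auto
          have a1: "P!j < P!0" using small[of j] big[of 0] ij 3 k by auto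
          have a2: "P!0 < N" using Pval[of 0] N_def k by auto
          have "contains \<pi> [3,1,4,2]"
          proof (rule contains_3142[of 0 i q "Suc j"])
            show "0 < i" "i < q" "q < Suc j" "Suc j < length \<pi>" using ij k lpi N_def by auto
            show "\<pi> ! i < \<pi> ! Suc j" "\<pi> ! Suc j < \<pi> ! 0" "\<pi> ! 0 < \<pi> ! q"
              using n1[of i] n1[of 0] n2[of j] n3 ij 3 k a1 a2 by auto
          qed
          then show ?thesis using av unfolding avoids_def by simp
        next
          case False
          have gt: "P!j < P!i" if "i < q" "q \<le> j" "j < n" for i j
          proof (cases "i < k")
            case True then show ?thesis using small[of j] big[of i] that 3 by auto
          next
            case False
            have "P!i \<noteq> P!j" using nth_eq_iff_index_eq[OF dP, of i j] that lP 3 by auto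
            moreover have "\<not> P!i < P!j" using \<open>\<not> (\<exists>i j. k \<le> i \<and> i < q \<and> q \<le> j \<and> j < n \<and> P!i < P!j)\<close> that False
              by (meson not_less)
            ultimately show ?thesis by linarith
          qed
          let ?S1 = "set (drop q P)" and ?S2 = "set (take q P)"
          have u: "?S1 \<union> ?S2 = {1..n}" using sP by (metis append_take_drop_id set_append sup_commute)
          have d: "?S1 \<inter> ?S2 = {}" using dP by (metis append_take_drop_id distinct_append inf_commute)
          have c: "card ?S1 = n - q" using dP lP by (simp add: distinct_card)
          have o: "\<forall>x\<in>?S1. \<forall>y\<in>?S2. x < y"
          proof (intro ballI)
            fix x y assume "x \<in> ?S1" "y \<in> ?S2"
            then obtain i j where "j < n - q" "x = P!(q + j)" "i < q" "y = P!i"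
              using Pq lP by (auto simp: in_set_conv_nth)
            then show "x < y" using gt[of i "q + j"] by auto
          qed
          have s1: "?S1 = {1..n-q}" using low_part[OF u d c o] .
          have "?S2 = {1..n} - ?S1" using u d by blast
          then have s2: "?S2 = {n-q+1..n}" unfolding s1 by (rule trans) (rule set_eqI, simp; presburger)
          have "take (Suc q) \<pi> = take q P @ [N]" using pxy P_def q_def by simp
          then have "set (take (Suc q) \<pi>) = insert N (set (take q P))" by simp
          also have "\<dots> = insert N {n-q+1..n}" using s2 by simp
          also have "\<dots> = {N - Suc q + 1..N}" using N_def 3 by (simp add: atLeastAtMostSuc_conv)
          finally have "dec_s \<pi>" unfolding dec_s_def lpi using 3 N_def by (intro exI[of _ "Suc q"]) simp
          then show ?thesis by simp
        qed
      qed
    qed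
  qed
qed


definition Bset :: "nat \<Rightarrow> nat list set" where "Bset n = {\<pi>\<in>sep_perms n. \<not> dec_p \<pi>}"
definition Cset :: "nat \<Rightarrow> nat list set" where "Cset n = {\<pi>\<in>sep_perms n. \<not> dec_s \<pi>}"
definition Dp :: "nat \<Rightarrow> nat list set" where "Dp n = {\<pi>\<in>sep_perms n. dec_p \<pi>}"
definition Ds :: "nat \<Rightarrow> nat list set" where "Ds n = {\<pi>\<in>sep_perms n. dec_s \<pi>}"

lemma img_add: "(\<lambda>x. x + c) ` {1..m} = {c+1..c+(m::nat)}"
  using image_add_atLeastAtMost'[of c 1 m] by (simp add: add.commute)

lemma img_sub: "(\<lambda>x. x - c) ` {c+1..c+m} = {1..(m::nat)}"
proof -
  have "(\<lambda>x. x - c) ` {c+1..c+m} = (\<lambda>x. x - c) ` ((\<lambda>x. x + c) ` {1..m})" by (simp only: img_add)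
  also have "\<dots> = (\<lambda>x. x + c - c) ` {1..m}" by (simp only: image_image)
  also have "\<dots> = {1..m}" by simp
  finally show ?thesis .
qed

lemma sep_perm: "\<pi> \<in> sep_perms n \<Longrightarrow> \<pi> \<in> perms n" unfolding sep_perms_def by simp

lemma pats_iff: "(\<forall>p\<in>pats. avoids \<pi> p) \<longleftrightarrow> avoids \<pi> [2,4,1,3] \<and> avoids \<pi> [3,1,4,2]"
  unfolding pats_def by simp

lemma sep_iff: "\<pi> \<in> sep_perms n \<longleftrightarrow> \<pi> \<in> perms n \<and> (\<forall>p\<in>pats. avoids \<pi> p)"
  unfolding sep_perms_def pats_iff by simp

lemma drop_set:
  assumes "\<pi> \<in> perms n" "set (take k \<pi>) = A"
  shows "set (drop k \<pi>) = {1..n} - A"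
proof -
  have "distinct \<pi>" using assms(1) unfolding perms_def by simp
  then have d2: "distinct (take k \<pi> @ drop k \<pi>)" by simp
  have "set (take k \<pi>) \<inter> set (drop k \<pi>) = {}" using d2[unfolded distinct_append] by blast
  moreover have "set (take k \<pi>) \<union> set (drop k \<pi>) = {1..n}"
  proof -
    have "set \<pi> = set (take k \<pi> @ drop k \<pi>)" by simp
    also have "\<dots> = set (take k \<pi>) \<union> set (drop k \<pi>)" by (rule set_append)
    finally show ?thesis using assms(1) unfolding perms_def by simp
  qed
  ultimately show ?thesis using assms(2) by blast
qed

lemma dsum_sep: "\<sigma> \<in> sep_perms a \<Longrightarrow> \<tau> \<in> sep_perms b \<Longrightarrow> dsum \<sigma> \<tau> \<in> sep_perms (a + b)"
  unfolding sep_iff using dsum_perms dsum_avoid by blast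

lemma ssum_sep: "\<sigma> \<in> sep_perms a \<Longrightarrow> \<tau> \<in> sep_perms b \<Longrightarrow> ssum \<sigma> \<tau> \<in> sep_perms (a + b)"
  unfolding sep_iff using ssum_perms ssum_avoid by blast

lemma bij_Dp:
  "bij_betw (\<lambda>(a,\<sigma>,\<tau>). dsum \<sigma> \<tau>) (SIGMA a:{1..<n}. Bset a \<times> sep_perms (n-a)) (Dp n)"
proof (rule bij_betw_imageI)
  show "inj_on (\<lambda>(a,\<sigma>,\<tau>). dsum \<sigma> \<tau>) (SIGMA a:{1..<n}. Bset a \<times> sep_perms (n-a))"
  proof (rule inj_onI)
    fix x y assume hx: "x \<in> (SIGMA a:{1..<n}. Bset a \<times> sep_perms (n-a))"
      and hy: "y \<in> (SIGMA a:{1..<n}. Bset a \<times> sep_perms (n-a))"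
      and hxy: "(\<lambda>(a,\<sigma>,\<tau>). dsum \<sigma> \<tau>) x = (\<lambda>(a,\<sigma>,\<tau>). dsum \<sigma> \<tau>) y"
    obtain a \<sigma> \<tau> where x: "x = (a,\<sigma>,\<tau>)" by (cases x) blast
    obtain a' \<sigma>' \<tau>' where y: "y = (a',\<sigma>',\<tau>')" by (cases y) blast
    have A: "a \<in> {1..<n}" "\<sigma> \<in> Bset a" "\<tau> \<in> sep_perms (n - a)"
      "a' \<in> {1..<n}" "\<sigma>' \<in> Bset a'" "\<tau>' \<in> sep_perms (n - a')" using hx hy unfolding x y by auto
    have eq: "dsum \<sigma> \<tau> = dsum \<sigma>' \<tau>'" using hxy unfolding x y by simp
    have l: "length \<sigma> = a" "length \<sigma>' = a'"
      using A(2,5) unfolding Bset_def sep_perms_def by (auto dest: perms_length)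
    have s: "set \<sigma> = {1..a}" "set \<sigma>' = {1..a'}"
      using A(2,5) unfolding Bset_def sep_perms_def perms_def by auto
    have nd: "\<not> dec_p \<sigma>" "\<not> dec_p \<sigma>'" using A(2,5) unfolding Bset_def by auto
    have t1: "take a (dsum \<sigma> \<tau>) = \<sigma>" "take a' (dsum \<sigma>' \<tau>') = \<sigma>'" unfolding dsum_def using l by auto
    have "\<not> a < a'"
    proof
      assume "a < a'"
      then have "take a \<sigma>' = \<sigma>" using t1 eq l unfolding dsum_def by (metis less_imp_le_nat take_append take_take min.absorb1 append_Nil2 diff_is_0_eq take0)
      then have "dec_p \<sigma>'" unfolding dec_p_def using \<open>a < a'\<close> l s A(1) by (intro exI[of _ a]) auto
      then show False using nd by simp
    qed
    moreover have "\<not> a' < a"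
    proof
      assume "a' < a"
      then have "take a' \<sigma> = \<sigma>'" using t1 eq l unfolding dsum_def by (metis less_imp_le_nat take_append take_take min.absorb1 append_Nil2 diff_is_0_eq take0)
      then have "dec_p \<sigma>" unfolding dec_p_def using \<open>a' < a\<close> l s A(4) by (intro exI[of _ a']) auto
      then show False using nd by simp
    qed
    ultimately have aa: "a = a'" by simp
    then have "\<sigma> = \<sigma>'" using t1 eq by metis
    moreover have mt: "map (\<lambda>x. x + a) \<tau> = map (\<lambda>x. x + a) \<tau>'"
      using eq aa l \<open>\<sigma> = \<sigma>'\<close> unfolding dsum_def by simp
    have "\<tau> = \<tau>'" using mt by (simp add: inj_on_def)
    ultimately show "x = y" using aa unfolding x y by simp
  qed
  show "(\<lambda>(a,\<sigma>,\<tau>). dsum \<sigma> \<tau>) ` (SIGMA a:{1..<n}. Bset a \<times> sep_perms (n-a)) = Dp n"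
  proof
    show "(\<lambda>(a,\<sigma>,\<tau>). dsum \<sigma> \<tau>) ` (SIGMA a:{1..<n}. Bset a \<times> sep_perms (n-a)) \<subseteq> Dp n"
    proof clarify
      fix a \<sigma> \<tau> assume A: "a \<in> {1..<n}" "\<sigma> \<in> Bset a" "\<tau> \<in> sep_perms (n - a)"
      have ss: "\<sigma> \<in> sep_perms a" using A(2) unfolding Bset_def by simp
      have "dsum \<sigma> \<tau> \<in> sep_perms (a + (n - a))" by (rule dsum_sep[OF ss A(3)])
      then have S: "dsum \<sigma> \<tau> \<in> sep_perms n" using A(1) by simp
      have l: "length \<sigma> = a" using ss perms_length sep_perm by blast
      have "take a (dsum \<sigma> \<tau>) = \<sigma>" unfolding dsum_def using l by simp
      moreover have "set \<sigma> = {1..a}" using ss sep_perm set_perms by blast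
      moreover have "length (dsum \<sigma> \<tau>) = n" using S sep_perm perms_length by blast
      ultimately have "dec_p (dsum \<sigma> \<tau>)" unfolding dec_p_def using A(1) by (intro exI[of _ a]) auto
      then show "dsum \<sigma> \<tau> \<in> Dp n" using S unfolding Dp_def by simp
    qed
    show "Dp n \<subseteq> (\<lambda>(a,\<sigma>,\<tau>). dsum \<sigma> \<tau>) ` (SIGMA a:{1..<n}. Bset a \<times> sep_perms (n-a))"
    proof
      fix \<pi> assume "\<pi> \<in> Dp n"
      then have S: "\<pi> \<in> sep_perms n" and D: "dec_p \<pi>" unfolding Dp_def by auto
      have P: "\<pi> \<in> perms n" using S sep_perm by blast
      have lp: "length \<pi> = n" using P perms_length by blast
      let ?Q = "\<lambda>k. 0 < k \<and> k < n \<and> set (take k \<pi>) = {1..k}"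
      define k where "k = (LEAST k. ?Q k)"
      have ex: "\<exists>k. ?Q k" using D lp unfolding dec_p_def by auto
      have Qk: "?Q k" unfolding k_def using LeastI_ex[OF ex] .
      have mink: "\<not> ?Q j" if "j < k" for j using not_less_Least[of j ?Q] that unfolding k_def by blast
      define \<sigma> where "\<sigma> = take k \<pi>"
      define \<tau> where "\<tau> = map (\<lambda>x. x - k) (drop k \<pi>)"
      have sd0: "set (drop k \<pi>) = {1..n} - {1..k}" using drop_set[OF P] Qk by blast
      have "{1..n} - {1..k} = {k+1..k+(n-k)}" using Qk by (intro set_eqI) (simp; arith)
      then have sd: "set (drop k \<pi>) = {k+1..k+(n-k)}" using sd0 by simp
      have ge: "\<forall>x\<in>set (drop k \<pi>). k \<le> x" using sd by auto
      have "\<sigma> \<in> perms k" unfolding perms_def \<sigma>_def using P Qk unfolding perms_def by auto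
      moreover have "\<forall>p\<in>pats. avoids \<sigma> p"
        using S contains_take_sub[of 0 k \<pi>] unfolding sep_iff avoids_def \<sigma>_def by (simp, blast)
      moreover have "\<not> dec_p \<sigma>"
      proof
        assume "dec_p \<sigma>"
        then obtain j where "0 < j" "j < length \<sigma>" "set (take j \<sigma>) = {1..j}" unfolding dec_p_def by auto
        moreover have "length \<sigma> = k" unfolding \<sigma>_def using Qk lp by simp
        ultimately have "?Q j" using Qk unfolding \<sigma>_def by auto
        then show False using mink \<open>j < length \<sigma>\<close> \<open>length \<sigma> = k\<close> by auto
      qed
      ultimately have sB: "\<sigma> \<in> Bset k" unfolding Bset_def sep_iff by simp
      have "\<tau> \<in> perms (n - k)"
      proof -
        have "inj_on (\<lambda>x. x - k) (set (drop k \<pi>))"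
        proof (rule inj_onI)
          fix x y assume "x \<in> set (drop k \<pi>)" "y \<in> set (drop k \<pi>)" "x - k = y - k"
          moreover have "k \<le> x" "k \<le> y" using ge calculation by auto
          ultimately show "x = y" by arith
        qed
        moreover have "distinct (drop k \<pi>)" using P unfolding perms_def by simp
        ultimately have "distinct \<tau>" unfolding \<tau>_def by (simp add: distinct_map)
        moreover have "set \<tau> = {1..n-k}" unfolding \<tau>_def using sd img_sub by simp
        ultimately show ?thesis unfolding perms_def by simp
      qed
      moreover have "\<forall>p\<in>pats. avoids \<tau> p"
        using S contains_drop_sub[of k k \<pi>] ge unfolding sep_iff avoids_def \<tau>_def by blast
      ultimately have sT: "\<tau> \<in> sep_perms (n - k)" unfolding sep_iff by simp
      have "dsum \<sigma> \<tau> = \<pi>"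
      proof -
        have "length \<sigma> = k" unfolding \<sigma>_def using Qk lp by simp
        moreover have "map (\<lambda>x. x + k) \<tau> = drop k \<pi>" unfolding \<tau>_def using ge by (simp add: map_idI)
        ultimately show ?thesis unfolding dsum_def \<sigma>_def by simp
      qed
      moreover have "(k, \<sigma>, \<tau>) \<in> (SIGMA a:{1..<n}. Bset a \<times> sep_perms (n-a))" using Qk sB sT by auto
      ultimately show "\<pi> \<in> (\<lambda>(a,\<sigma>,\<tau>). dsum \<sigma> \<tau>) ` (SIGMA a:{1..<n}. Bset a \<times> sep_perms (n-a))"
        by (intro image_eqI[where x="(k,\<sigma>,\<tau>)"]) simp_all
    qed
  qed
qed


lemma img_add2: "(\<lambda>x. x + c) ` {a..b} = {c+a..c+(b::nat)}"
  using image_add_atLeastAtMost'[of c a b] by (simp add: add.commute)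

lemma img_sub2: "(\<lambda>x. x - c) ` {c+a..c+b} = {a..(b::nat)}"
proof -
  have "(\<lambda>x. x - c) ` {c+a..c+b} = (\<lambda>x. x - c) ` ((\<lambda>x. x + c) ` {a..b})" by (simp only: img_add2)
  also have "\<dots> = (\<lambda>x. x + c - c) ` {a..b}" by (simp only: image_image)
  also have "\<dots> = {a..b}" by simp
  finally show ?thesis .
qed

lemma set_map_inj_eq:
  assumes "inj_on g U" "set L \<subseteq> U" "B \<subseteq> U" "set (map g L) = g ` B"
  shows "set L = B"
  using assms inj_on_image_eq_iff by (metis set_map)

lemma bij_Ds:
  "bij_betw (\<lambda>(a,\<sigma>,\<tau>). ssum \<sigma> \<tau>) (SIGMA a:{1..<n}. Cset a \<times> sep_perms (n-a)) (Ds n)"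
proof (rule bij_betw_imageI)
  show "inj_on (\<lambda>(a,\<sigma>,\<tau>). ssum \<sigma> \<tau>) (SIGMA a:{1..<n}. Cset a \<times> sep_perms (n-a))"
  proof (rule inj_onI)
    fix x y assume hx: "x \<in> (SIGMA a:{1..<n}. Cset a \<times> sep_perms (n-a))"
      and hy: "y \<in> (SIGMA a:{1..<n}. Cset a \<times> sep_perms (n-a))"
      and hxy: "(\<lambda>(a,\<sigma>,\<tau>). ssum \<sigma> \<tau>) x = (\<lambda>(a,\<sigma>,\<tau>). ssum \<sigma> \<tau>) y"
    obtain a \<sigma> \<tau> where x: "x = (a,\<sigma>,\<tau>)" by (cases x) blast
    obtain a' \<sigma>' \<tau>' where y: "y = (a',\<sigma>',\<tau>')" by (cases y) blast
    have A: "a \<in> {1..<n}" "\<sigma> \<in> Cset a" "\<tau> \<in> sep_perms (n - a)"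
      "a' \<in> {1..<n}" "\<sigma>' \<in> Cset a'" "\<tau>' \<in> sep_perms (n - a')" using hx hy unfolding x y by auto
    have eq: "ssum \<sigma> \<tau> = ssum \<sigma>' \<tau>'" using hxy unfolding x y by simp
    have l: "length \<sigma> = a" "length \<sigma>' = a'" "length \<tau> = n - a" "length \<tau>' = n - a'"
      using A unfolding Cset_def sep_perms_def by (auto dest: perms_length)
    have s: "set \<sigma> = {1..a}" "set \<sigma>' = {1..a'}"
      using A(2,5) unfolding Cset_def sep_perms_def perms_def by auto
    have nd: "\<not> dec_s \<sigma>" "\<not> dec_s \<sigma>'" using A(2,5) unfolding Cset_def by auto
    have t1: "take a (ssum \<sigma> \<tau>) = map (\<lambda>x. x + (n-a)) \<sigma>" "take a' (ssum \<sigma>' \<tau>') = map (\<lambda>x. x + (n-a')) \<sigma>'"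
      unfolding ssum_def using l by auto
    have gen: "dec_s \<sigma>2" if B: "b < b2" "1 \<le> b" "b2 < n" "length \<sigma>2 = b2" "set \<sigma>2 = {1..b2}"
        "take b (map (\<lambda>x. x + (n-b2)) \<sigma>2) = map (\<lambda>x. x + (n-b)) \<sigma>1" "set \<sigma>1 = {1..b}" for b b2 \<sigma>1 \<sigma>2
    proof -
      define c where "c = n - b2"
      define d where "d = b2 - b"
      have nb: "n - b = c + d" and b2: "b2 = d + b" using B by (simp_all add: c_def d_def)
      have t: "take b (map (\<lambda>x. x + c) \<sigma>2) = map (\<lambda>x. x + (c+d)) \<sigma>1" using B(6) nb c_def by simp
      have "set (map (\<lambda>x. x + c) (take b \<sigma>2)) = (\<lambda>x. x + (c+d)) ` {1..b}"
        using t B(7) by (metis set_map take_map)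
      also have "\<dots> = (\<lambda>x. x + c) ` ((\<lambda>x. x + d) ` {1..b})" unfolding image_image by (intro image_cong refl) simp
      finally have sm: "set (map (\<lambda>x. x + c) (take b \<sigma>2)) = (\<lambda>x. x + c) ` ((\<lambda>x. x + d) ` {1..b})" .
      have "inj_on (\<lambda>x. x + c) UNIV" by (simp add: inj_on_def)
      then have "set (take b \<sigma>2) = (\<lambda>x. x + d) ` {1..b}"
        using set_map_inj_eq[OF _ _ _ sm] by blast
      also have "\<dots> = {d+1..d+b}" by (rule img_add)
      finally have st: "set (take b \<sigma>2) = {d+1..d+b}" .
      show "dec_s \<sigma>2" unfolding dec_s_def B(4) using B(1,2) st b2 by (intro exI[of _ b]) simp
    qed
    have "\<not> a < a'"
    proof
      assume "a < a'"
      have "take a (map (\<lambda>x. x + (n-a')) \<sigma>') = take a (take a' (ssum \<sigma>' \<tau>'))" using t1(2) by simp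
      also have "\<dots> = take a (ssum \<sigma>' \<tau>')" using \<open>a < a'\<close> by (simp add: min_def)
      also have "\<dots> = map (\<lambda>x. x + (n-a)) \<sigma>" using eq t1(1) by simp
      finally have "take a (map (\<lambda>x. x + (n-a')) \<sigma>') = map (\<lambda>x. x + (n-a)) \<sigma>" .
      then have "dec_s \<sigma>'" using gen[of a a' \<sigma>' \<sigma>] \<open>a < a'\<close> A l s by auto
      then show False using nd by simp
    qed
    moreover have "\<not> a' < a"
    proof
      assume "a' < a"
      have "take a' (map (\<lambda>x. x + (n-a)) \<sigma>) = take a' (take a (ssum \<sigma> \<tau>))" using t1(1) by simp
      also have "\<dots> = take a' (ssum \<sigma> \<tau>)" using \<open>a' < a\<close> by (simp add: min_def)
      also have "\<dots> = map (\<lambda>x. x + (n-a')) \<sigma>'" using eq t1(2) by simp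
      finally have "take a' (map (\<lambda>x. x + (n-a)) \<sigma>) = map (\<lambda>x. x + (n-a')) \<sigma>'" .
      then have "dec_s \<sigma>" using gen[of a' a \<sigma> \<sigma>'] \<open>a' < a\<close> A l s by auto
      then show False using nd by simp
    qed
    ultimately have aa: "a = a'" by simp
    have "map (\<lambda>x. x + (n-a)) \<sigma> = map (\<lambda>x. x + (n-a)) \<sigma>'" using t1 eq aa by metis
    then have s1: "\<sigma> = \<sigma>'" by (simp add: inj_on_def)
    have "\<tau> = \<tau>'" using eq aa l unfolding ssum_def s1 by simp
    then show "x = y" using aa s1 unfolding x y by simp
  qed
  show "(\<lambda>(a,\<sigma>,\<tau>). ssum \<sigma> \<tau>) ` (SIGMA a:{1..<n}. Cset a \<times> sep_perms (n-a)) = Ds n"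
  proof
    show "(\<lambda>(a,\<sigma>,\<tau>). ssum \<sigma> \<tau>) ` (SIGMA a:{1..<n}. Cset a \<times> sep_perms (n-a)) \<subseteq> Ds n"
    proof clarify
      fix a \<sigma> \<tau> assume A: "a \<in> {1..<n}" "\<sigma> \<in> Cset a" "\<tau> \<in> sep_perms (n - a)"
      have ss: "\<sigma> \<in> sep_perms a" using A(2) unfolding Cset_def by simp
      have "ssum \<sigma> \<tau> \<in> sep_perms (a + (n - a))" by (rule ssum_sep[OF ss A(3)])
      then have S: "ssum \<sigma> \<tau> \<in> sep_perms n" using A(1) by simp
      have l: "length \<sigma> = a" "length \<tau> = n - a" using ss A(3) perms_length sep_perm by blast+
      have "take a (ssum \<sigma> \<tau>) = map (\<lambda>x. x + (n-a)) \<sigma>" unfolding ssum_def using l by simp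
      moreover have "set \<sigma> = {1..a}" using ss sep_perm set_perms by blast
      ultimately have st: "set (take a (ssum \<sigma> \<tau>)) = {(n-a)+1..(n-a)+a}" using img_add2 by simp
      have ln: "length (ssum \<sigma> \<tau>) = n" using S sep_perm perms_length by blast
      have "dec_s (ssum \<sigma> \<tau>)" unfolding dec_s_def ln using A(1) st by (intro exI[of _ a]) auto
      then show "ssum \<sigma> \<tau> \<in> Ds n" using S unfolding Ds_def by simp
    qed
    show "Ds n \<subseteq> (\<lambda>(a,\<sigma>,\<tau>). ssum \<sigma> \<tau>) ` (SIGMA a:{1..<n}. Cset a \<times> sep_perms (n-a))"
    proof
      fix \<pi> assume "\<pi> \<in> Ds n"
      then have S: "\<pi> \<in> sep_perms n" and D: "dec_s \<pi>" unfolding Ds_def by auto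
      have P: "\<pi> \<in> perms n" using S sep_perm by blast
      have lp: "length \<pi> = n" using P perms_length by blast
      let ?Q = "\<lambda>k. 0 < k \<and> k < n \<and> set (take k \<pi>) = {n-k+1..n}"
      define k where "k = (LEAST k. ?Q k)"
      have ex: "\<exists>k. ?Q k" using D lp unfolding dec_s_def by auto
      have Qk: "?Q k" unfolding k_def using LeastI_ex[OF ex] .
      have mink: "\<not> ?Q j" if "j < k" for j using not_less_Least[of j ?Q] that unfolding k_def by blast
      define \<sigma> where "\<sigma> = map (\<lambda>x. x - (n-k)) (take k \<pi>)"
      define \<tau> where "\<tau> = drop k \<pi>"
      have stk: "set (take k \<pi>) = {(n-k)+1..(n-k)+k}" using Qk by auto
      have ge: "\<forall>x\<in>set (take k \<pi>). n - k \<le> x" using stk by auto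
      have sd0: "set (drop k \<pi>) = {1..n} - {n-k+1..n}" using drop_set[OF P] Qk by blast
      have "{1..n} - {n-k+1..n} = {1..n-k}" using Qk by (intro set_eqI) (simp; arith)
      then have sd: "set (drop k \<pi>) = {1..n-k}" using sd0 by simp
      have injU: "inj_on (\<lambda>x. x - (n-k)) {n-k..}"
      proof (rule inj_onI)
        fix x y assume "x \<in> {n-k..}" "y \<in> {n-k..}" "x - (n-k) = y - (n-k)"
        then show "x = y" by auto
      qed
      have "\<sigma> \<in> perms k"
      proof -
        have "inj_on (\<lambda>x. x - (n-k)) (set (take k \<pi>))" using inj_on_subset[OF injU] ge by auto
        moreover have "distinct (take k \<pi>)" using P unfolding perms_def by simp
        ultimately have "distinct \<sigma>" unfolding \<sigma>_def by (simp add: distinct_map)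
        moreover have "set \<sigma> = {1..k}" unfolding \<sigma>_def using stk img_sub by simp
        ultimately show ?thesis unfolding perms_def by simp
      qed
      moreover have "\<forall>p\<in>pats. avoids \<sigma> p"
        using S contains_take_sub[of "n-k" k \<pi>] ge unfolding sep_iff avoids_def \<sigma>_def by blast
      moreover have "\<not> dec_s \<sigma>"
      proof
        assume "dec_s \<sigma>"
        moreover have ls: "length \<sigma> = k" unfolding \<sigma>_def using Qk lp by simp
        ultimately obtain j where j: "0 < j" "j < k" "set (take j \<sigma>) = {k-j+1..k}" unfolding dec_s_def by auto
        have "set (take j \<pi>) = {n-j+1..n}"
        proof (rule set_map_inj_eq[OF injU])
          have "set (take j \<pi>) \<subseteq> set (take k \<pi>)" using j(2) by (simp add: set_take_subset_set_take)
          then show "set (take j \<pi>) \<subseteq> {n-k..}" using ge by auto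
          show "{n-j+1..n} \<subseteq> {n-k..}" using j by auto
          have "set (map (\<lambda>x. x - (n-k)) (take j \<pi>)) = {k-j+1..k}" using j(2,3) unfolding \<sigma>_def by (simp add: take_map min_def)
          also have "\<dots> = (\<lambda>x. x - (n-k)) ` {(n-k)+(k-j+1)..(n-k)+k}" by (rule img_sub2[symmetric])
          also have "{(n-k)+(k-j+1)..(n-k)+k} = {n-j+1..n}" using j Qk by (intro arg_cong2[where f=atLeastAtMost]; linarith)
          finally show "set (map (\<lambda>x. x - (n-k)) (take j \<pi>)) = (\<lambda>x. x - (n-k)) ` {n-j+1..n}" .
        qed
        then have "?Q j" using j Qk by auto
        then show False using mink j(2) by auto
      qed
      ultimately have sB: "\<sigma> \<in> Cset k" unfolding Cset_def sep_iff by simp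
      have "\<tau> \<in> perms (n - k)"
        unfolding perms_def \<tau>_def using P sd unfolding perms_def by simp
      moreover have "\<forall>p\<in>pats. avoids \<tau> p"
        using S contains_drop_sub[of 0 k \<pi>] unfolding sep_iff avoids_def \<tau>_def by (simp, blast)
      ultimately have sT: "\<tau> \<in> sep_perms (n - k)" unfolding sep_iff by simp
      have "ssum \<sigma> \<tau> = \<pi>"
      proof -
        have "length \<tau> = n - k" unfolding \<tau>_def using lp by simp
        moreover have "map (\<lambda>x. x + (n-k)) \<sigma> = take k \<pi>" unfolding \<sigma>_def using ge by (simp add: map_idI)
        ultimately show ?thesis unfolding ssum_def \<tau>_def by simp
      qed
      moreover have "(k, \<sigma>, \<tau>) \<in> (SIGMA a:{1..<n}. Cset a \<times> sep_perms (n-a))" using Qk sB sT by auto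
      ultimately show "\<pi> \<in> (\<lambda>(a,\<sigma>,\<tau>). ssum \<sigma> \<tau>) ` (SIGMA a:{1..<n}. Cset a \<times> sep_perms (n-a))"
        by (intro image_eqI[where x="(k,\<sigma>,\<tau>)"]) simp_all
    qed
  qed
qed


definition pol :: "nat list set \<Rightarrow> int poly" where "pol S = (\<Sum>\<pi>\<in>S. monom 1 (des \<pi>))"

lemma finite_Bset: "finite (Bset n)" using finite_sep[of n] unfolding Bset_def by simp
lemma finite_Cset: "finite (Cset n)" using finite_sep[of n] unfolding Cset_def by simp

lemma prod_sum:
  assumes "finite A" "finite B"
  shows "(\<Sum>p\<in>A\<times>B. monom 1 (des (fst p) + des (snd p))) = pol A * pol B"
proof -
  have "pol A * pol B = (\<Sum>i\<in>A. \<Sum>j\<in>B. monom 1 (des i) * monom 1 (des j))"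
    unfolding pol_def by (rule sum_product)
  also have "\<dots> = (\<Sum>i\<in>A. \<Sum>j\<in>B. monom 1 (des i + des j))" by (simp add: mult_monom)
  also have "\<dots> = (\<Sum>(i,j)\<in>A\<times>B. monom 1 (des i + des j))" by (rule sum.cartesian_product)
  also have "\<dots> = (\<Sum>p\<in>A\<times>B. monom 1 (des (fst p) + des (snd p)))" by (simp add: case_prod_beta')
  finally show ?thesis by simp
qed

lemma sigma_split:
  fixes h :: "nat list \<Rightarrow> nat list \<Rightarrow> nat list" and S :: "nat \<Rightarrow> nat list set" and R :: "nat \<Rightarrow> nat list set"
  assumes "\<And>a. finite (S a)" "\<And>a. finite (R a)"
  shows "(\<Sum>x\<in>(SIGMA a:{1..<n}. S a \<times> R (n-a)). g ((\<lambda>(a,\<sigma>,\<tau>). h \<sigma> \<tau>) x))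
    = (\<Sum>a\<in>{1..<n}. \<Sum>p\<in>S a \<times> R (n-a). g (h (fst p) (snd p)))"
proof -
  have "(\<Sum>a\<in>{1..<n}. \<Sum>p\<in>S a \<times> R (n-a). g (h (fst p) (snd p)))
     = (\<Sum>(a,p)\<in>(SIGMA a:{1..<n}. S a \<times> R (n-a)). g (h (fst p) (snd p)))"
    by (rule sum.Sigma) (auto simp: assms)
  also have "\<dots> = (\<Sum>x\<in>(SIGMA a:{1..<n}. S a \<times> R (n-a)). g ((\<lambda>(a,\<sigma>,\<tau>). h \<sigma> \<tau>) x))"
    by (rule sum.cong) (auto split: prod.split)
  finally show ?thesis by simp
qed

lemma pol_Dp: "pol (Dp n) = (\<Sum>a\<in>{1..<n}. pol (Bset a) * pol (sep_perms (n-a)))"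
proof -
  have "pol (Dp n) = (\<Sum>x\<in>(SIGMA a:{1..<n}. Bset a \<times> sep_perms (n-a)). monom 1 (des ((\<lambda>(a,\<sigma>,\<tau>). dsum \<sigma> \<tau>) x)))"
    unfolding pol_def by (rule sum.reindex_bij_betw[OF bij_Dp, symmetric])
  also have "\<dots> = (\<Sum>a\<in>{1..<n}. \<Sum>p\<in>Bset a \<times> sep_perms (n-a). monom 1 (des (dsum (fst p) (snd p))))"
    by (rule sigma_split[where g="\<lambda>x. monom 1 (des x)"]) (simp_all add: finite_Bset finite_sep)
  also have "\<dots> = (\<Sum>a\<in>{1..<n}. pol (Bset a) * pol (sep_perms (n-a)))"
  proof (rule sum.cong[OF refl])
    fix a assume a: "a \<in> {1..<n}"
    have "(\<Sum>p\<in>Bset a \<times> sep_perms (n-a). monom 1 (des (dsum (fst p) (snd p))))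
        = (\<Sum>p\<in>Bset a \<times> sep_perms (n-a). monom (1::int) (des (fst p) + des (snd p)))"
    proof (rule sum.cong[OF refl])
      fix p assume "p \<in> Bset a \<times> sep_perms (n-a)"
      then have "fst p \<in> perms a" "snd p \<in> perms (n-a)" unfolding Bset_def sep_perms_def by auto
      then show "monom 1 (des (dsum (fst p) (snd p))) = monom (1::int) (des (fst p) + des (snd p))"
        using des_dsum a by auto
    qed
    also have "\<dots> = pol (Bset a) * pol (sep_perms (n-a))" by (rule prod_sum) (simp_all add: finite_Bset finite_sep)
    finally show "(\<Sum>p\<in>Bset a \<times> sep_perms (n-a). monom 1 (des (dsum (fst p) (snd p)))) = pol (Bset a) * pol (sep_perms (n-a))" .
  qed
  finally show ?thesis .
qed

lemma pol_Ds: "pol (Ds n) = (\<Sum>a\<in>{1..<n}. [:0,1:] * (pol (Cset a) * pol (sep_perms (n-a))))"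
proof -
  have "pol (Ds n) = (\<Sum>x\<in>(SIGMA a:{1..<n}. Cset a \<times> sep_perms (n-a)). monom 1 (des ((\<lambda>(a,\<sigma>,\<tau>). ssum \<sigma> \<tau>) x)))"
    unfolding pol_def by (rule sum.reindex_bij_betw[OF bij_Ds, symmetric])
  also have "\<dots> = (\<Sum>a\<in>{1..<n}. \<Sum>p\<in>Cset a \<times> sep_perms (n-a). monom 1 (des (ssum (fst p) (snd p))))"
    by (rule sigma_split[where g="\<lambda>x. monom 1 (des x)"]) (simp_all add: finite_Cset finite_sep)
  also have "\<dots> = (\<Sum>a\<in>{1..<n}. [:0,1:] * (pol (Cset a) * pol (sep_perms (n-a))))"
  proof (rule sum.cong[OF refl])
    fix a assume a: "a \<in> {1..<n}"
    have "(\<Sum>p\<in>Cset a \<times> sep_perms (n-a). monom 1 (des (ssum (fst p) (snd p))))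
        = (\<Sum>p\<in>Cset a \<times> sep_perms (n-a). [:0,1:] * monom (1::int) (des (fst p) + des (snd p)))"
    proof (rule sum.cong[OF refl])
      fix p assume "p \<in> Cset a \<times> sep_perms (n-a)"
      then have "fst p \<in> perms a" "snd p \<in> perms (n-a)" unfolding Cset_def sep_perms_def by auto
      then have "des (ssum (fst p) (snd p)) = Suc (des (fst p) + des (snd p))"
        using des_ssum a by auto
      moreover have "monom (1::int) (Suc m) = [:0,1:] * monom 1 m" for m
        by (simp add: monom_Suc pCons_one)
      ultimately show "monom 1 (des (ssum (fst p) (snd p))) = [:0,1:] * monom (1::int) (des (fst p) + des (snd p))"
        by simp
    qed
    also have "\<dots> = [:0,1:] * (\<Sum>p\<in>Cset a \<times> sep_perms (n-a). monom (1::int) (des (fst p) + des (snd p)))"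
      by (rule sum_distrib_left[symmetric])
    also have "\<dots> = [:0,1:] * (pol (Cset a) * pol (sep_perms (n-a)))"
      using prod_sum[OF finite_Cset finite_sep] by simp
    finally show "(\<Sum>p\<in>Cset a \<times> sep_perms (n-a). monom 1 (des (ssum (fst p) (snd p)))) = [:0,1:] * (pol (Cset a) * pol (sep_perms (n-a)))" .
  qed
  finally show ?thesis .
qed


unbundle fps_syntax

lemma not_both:
  assumes "\<pi> \<in> perms n" "dec_p \<pi>" "dec_s \<pi>" shows False
proof -
  have l: "length \<pi> = n" using assms(1) perms_length by blast
  obtain k where k: "0 < k" "k < n" "set (take k \<pi>) = {1..k}" using assms(2) l unfolding dec_p_def by auto
  obtain j where j: "0 < j" "j < n" "set (take j \<pi>) = {n-j+1..n}" using assms(3) l unfolding dec_s_def by auto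
  show False
  proof (cases "k \<le> j")
    case True
    then have "set (take k \<pi>) \<subseteq> set (take j \<pi>)" by (rule set_take_subset_set_take)
    moreover have "1 \<in> set (take k \<pi>)" using k by simp
    ultimately have "1 \<in> {n-j+1..n}" using j(3) by blast
    then show False using j by simp
  next
    case False
    then have "set (take j \<pi>) \<subseteq> set (take k \<pi>)" by (intro set_take_subset_set_take) simp
    moreover have "n \<in> set (take j \<pi>)" using j by simp
    ultimately have "n \<in> {1..k}" using k(3) by blast
    then show False using k by simp
  qed
qed

lemma perms_one: "perms 1 = {[1]}"
proof
  show "perms 1 \<subseteq> {[1]}"
  proof
    fix \<pi> assume a: "\<pi> \<in> perms 1"
    then have "length \<pi> = 1" using perms_length by blast
    then obtain x where x: "\<pi> = [x]" by (metis One_nat_def length_0_conv length_Suc_conv)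
    then have "{x} = {1..1}" using a unfolding perms_def by simp
    then show "\<pi> \<in> {[1]}" using x by simp
  qed
  show "{[1]} \<subseteq> perms 1" unfolding perms_def by simp
qed

lemma avoids_one: "length p = 4 \<Longrightarrow> avoids [x] p"
proof -
  assume lp: "length p = 4"
  show ?thesis unfolding avoids_def contains_def
  proof
    assume "\<exists>f. strict_mono_on {..<length p} f \<and> (\<forall>a<length p. f a < length [x]) \<and>
      (\<forall>a<length p. \<forall>b<length p. (p ! a < p ! b) = ([x] ! f a < [x] ! f b))"
    then obtain f :: "nat \<Rightarrow> nat" where f: "strict_mono_on {..<4} f" "\<forall>a<4. f a = 0" using lp by auto
    then have "f 0 < f 1" using mono4[OF f(1)] by simp
    moreover have "f 1 = 0" "f 0 = 0" using f(2) by simp_all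
    ultimately show False by simp
  qed
qed

lemma sep_one: "sep_perms 1 = {[1]}"
  unfolding sep_perms_def perms_one using avoids_one by auto

lemma pol_sep_one: "pol (sep_perms 1) = 1"
  unfolding pol_def sep_one by (simp add: des_Cons)

definition Af :: "int poly fps" where "Af = Abs_fps (\<lambda>n. if n = 0 then 0 else pol (sep_perms n))"
definition Bf :: "int poly fps" where "Bf = Abs_fps (\<lambda>n. if n = 0 then 0 else pol (Bset n))"
definition Cf :: "int poly fps" where "Cf = Abs_fps (\<lambda>n. if n = 0 then 0 else pol (Cset n))"

lemma conv:
  fixes F G :: "'a::comm_ring_1 fps"
  assumes "F $ 0 = 0" "G $ 0 = 0"
  shows "(F * G) $ n = (\<Sum>a\<in>{1..<n}. F $ a * G $ (n-a))"
proof -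
  have "(F * G) $ n = (\<Sum>i=0..n. F $ i * G $ (n - i))" by (rule fps_mult_nth)
  also have "\<dots> = (\<Sum>a\<in>{1..<n}. F $ a * G $ (n-a))"
  proof (rule sum.mono_neutral_right)
    show "finite {0..n}" by simp
    show "{1..<n} \<subseteq> {0..n}" by auto
    show "\<forall>i\<in>{0..n} - {1..<n}. F $ i * G $ (n - i) = 0"
    proof
      fix i assume "i \<in> {0..n} - {1..<n}"
      then have "i = 0 \<or> i = n" by auto
      then show "F $ i * G $ (n - i) = 0" using assms by auto
    qed
  qed
  finally show ?thesis .
qed

lemma pol_union: "finite A \<Longrightarrow> finite B \<Longrightarrow> A \<inter> B = {} \<Longrightarrow> pol (A \<union> B) = pol A + pol B"
  unfolding pol_def by (rule sum.union_disjoint)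

lemma eq1: "Af = Bf + Bf * Af"
proof (rule fps_ext)
  fix n
  show "Af $ n = (Bf + Bf * Af) $ n"
  proof (cases "n = 0")
    case True then show ?thesis by (simp add: Af_def Bf_def)
  next
    case False
    have "sep_perms n = Bset n \<union> Dp n" "Bset n \<inter> Dp n = {}" unfolding Bset_def Dp_def by auto
    then have "pol (sep_perms n) = pol (Bset n) + pol (Dp n)"
      using pol_union finite_Bset finite_sep unfolding Dp_def by (metis finite_subset Un_upper2)
    also have "pol (Dp n) = (\<Sum>a\<in>{1..<n}. Bf $ a * Af $ (n-a))"
      unfolding pol_Dp by (rule sum.cong) (auto simp: Af_def Bf_def)
    also have "\<dots> = (Bf * Af) $ n" by (rule conv[symmetric]) (simp_all add: Af_def Bf_def)
    finally show ?thesis using False by (simp add: Af_def Bf_def)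
  qed
qed

lemma eq2: "Af = Cf + fps_const [:0,1:] * (Cf * Af)"
proof (rule fps_ext)
  fix n
  show "Af $ n = (Cf + fps_const [:0,1:] * (Cf * Af)) $ n"
  proof (cases "n = 0")
    case True then show ?thesis by (simp add: Af_def Cf_def)
  next
    case False
    have "sep_perms n = Cset n \<union> Ds n" "Cset n \<inter> Ds n = {}" unfolding Cset_def Ds_def by auto
    then have "pol (sep_perms n) = pol (Cset n) + pol (Ds n)"
      using pol_union finite_Cset finite_sep unfolding Ds_def by (metis finite_subset Un_upper2)
    also have "pol (Ds n) = [:0,1:] * (\<Sum>a\<in>{1..<n}. Cf $ a * Af $ (n-a))"
      unfolding pol_Ds sum_distrib_left by (rule sum.cong) (auto simp: Af_def Cf_def)
    also have "\<dots> = [:0,1:] * (Cf * Af) $ n" by (subst conv) (simp_all add: Af_def Cf_def)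
    finally show ?thesis using False by (simp add: Af_def Cf_def)
  qed
qed

lemma eq3: "Bf + Cf = Af + fps_X"
proof (rule fps_ext)
  fix n
  show "(Bf + Cf) $ n = (Af + fps_X) $ n"
  proof (cases "n = 0")
    case True then show ?thesis by (simp add: Af_def Bf_def Cf_def)
  next
    case False
    show ?thesis
    proof (cases "n = 1")
      case True
      have "Bset 1 = sep_perms 1" "Cset 1 = sep_perms 1" unfolding Bset_def Cset_def dec_p_def dec_s_def sep_one by auto
      then show ?thesis using True pol_sep_one by (simp add: Af_def Bf_def Cf_def)
    next
      case n1: False
      then have n2: "2 \<le> n" using False by simp
      have u: "sep_perms n = Bset n \<union> Cset n" using sep_dec[OF n2] not_both unfolding Bset_def Cset_def sep_perms_def
        by blast
      have i: "Bset n \<inter> Cset n = {}" using sep_dec[OF n2] unfolding Bset_def Cset_def by blast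
      have "pol (sep_perms n) = pol (Bset n) + pol (Cset n)" unfolding u by (rule pol_union[OF finite_Bset finite_Cset i])
      then show ?thesis using False n1 by (simp add: Af_def Bf_def Cf_def)
    qed
  qed
qed

lemma A_eq: "Af = fps_X + (1 + fps_const [:0,1:]) * fps_X * Af + fps_const [:0,1:] * fps_X * Af^2 + fps_const [:0,1:] * Af^3"
proof -
  define T :: "int poly fps" where "T = fps_const [:0,1:]"
  have e1: "Bf * (1 + Af) = Af" using eq1 by (simp add: algebra_simps)
  have e2: "Cf * (1 + T * Af) = Af" using eq2 unfolding T_def by (simp add: algebra_simps)
  have "(Af + fps_X) * ((1 + Af) * (1 + T * Af)) = (Bf + Cf) * ((1 + Af) * (1 + T * Af))" using eq3 by simp
  also have "\<dots> = (Bf * (1 + Af)) * (1 + T * Af) + (Cf * (1 + T * Af)) * (1 + Af)" by (simp add: algebra_simps)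
  also have "\<dots> = Af * (1 + T * Af) + Af * (1 + Af)" using e1 e2 by simp
  finally have h: "(Af + fps_X) * ((1 + Af) * (1 + T * Af)) = Af * (1 + T * Af) + Af * (1 + Af)" .
  have "Af = fps_X + (1 + T) * fps_X * Af + T * fps_X * Af^2 + T * Af^3"
    using h by algebra
  then show ?thesis unfolding T_def .
qed


unbundle fps_syntax

definition fw :: "nat \<Rightarrow> int poly" where
  "fw l = (if l = 0 then 1 else if odd l then [:0,1:]^((l-1) div 2) * [:1,1:] else smult 2 ([:0,1:]^(l div 2)))"

fun ws :: "nat \<Rightarrow> unit tree \<Rightarrow> int poly" where
  "ws s Leaf = fw s"
| "ws s (Node l x r) = ws 0 l * ws (Suc s) r"

lemma chT: "prod_list (map fw (chains True T)) = fw (rlen T) * prod_list (map fw (chains False T))"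
  by (cases T) (simp_all add: fw_def)

lemma ws_chains: "ws s T = fw (rlen T + s) * prod_list (map fw (chains False T))"
proof (induction T arbitrary: s)
  case Leaf then show ?case by simp
next
  case (Node l x r)
  have "ws s (Node l x r) = ws 0 l * ws (Suc s) r" by simp
  also have "\<dots> = (fw (rlen l) * prod_list (map fw (chains False l))) * (fw (rlen r + Suc s) * prod_list (map fw (chains False r)))"
    using Node.IH by simp
  also have "\<dots> = fw (rlen (Node l x r) + s) * prod_list (map fw (chains False (Node l x r)))"
    using chT[of l] by (simp add: algebra_simps)
  finally show ?case .
qed

lemma ws0: "ws 0 T = prod_list (map fw (chains True T))"
  using ws_chains[of 0 T] chT[of T] by simp

lemma fw_step: "1 \<le> l \<Longrightarrow> fw (l + 2) = [:0,1:] * fw l"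
proof -
  assume l: "1 \<le> l"
  show ?thesis
  proof (cases "odd l")
    case True
    then have "(l + 2 - 1) div 2 = Suc ((l - 1) div 2)" using l by (auto elim!: oddE)
    then show ?thesis using True l unfolding fw_def by (simp add: algebra_simps)
  next
    case False
    then have "(l + 2) div 2 = Suc (l div 2)" by auto
    then show ?thesis using False l unfolding fw_def by (simp add: algebra_simps)
  qed
qed

lemma rlen_pos: "T \<noteq> Leaf \<Longrightarrow> 1 \<le> rlen T" by (cases T) auto

lemma ws2: "ws (Suc (Suc 0)) T = [:0,1:] * ws 0 T + (if T = Leaf then [:0,1:] else 0)"
proof (cases "T = Leaf")
  case True
  have "fw (Suc (Suc 0)) = [:0,2:]" unfolding fw_def by simp
  moreover have "fw 0 = 1" unfolding fw_def by simp
  ultimately show ?thesis using True by simp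
next
  case False
  have "ws (Suc (Suc 0)) T = fw (rlen T + 2) * prod_list (map fw (chains False T))" using ws_chains[of "Suc (Suc 0)" T] by simp
  also have "\<dots> = [:0,1:] * (fw (rlen T + 0) * prod_list (map fw (chains False T)))"
    using fw_step[OF rlen_pos[OF False]] by simp
  also have "\<dots> = [:0,1:] * ws 0 T" using ws_chains[of 0 T] by simp
  finally show ?thesis using False by simp
qed

definition tr :: "nat \<Rightarrow> unit tree set" where "tr m = {T. size T = m}"

lemma tr0: "tr 0 = {Leaf}" unfolding tr_def by auto

lemma bij_tr: "bij_betw (\<lambda>(a,l,r). Node l () r) (SIGMA a:{..m}. tr a \<times> tr (m-a)) (tr (Suc m))"
proof (rule bij_betw_imageI)
  show "inj_on (\<lambda>(a,l,r). Node l () r) (SIGMA a:{..m}. tr a \<times> tr (m-a))"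
    unfolding inj_on_def tr_def by auto
  show "(\<lambda>(a,l,r). Node l () r) ` (SIGMA a:{..m}. tr a \<times> tr (m-a)) = tr (Suc m)"
  proof
    show "(\<lambda>(a,l,r). Node l () r) ` (SIGMA a:{..m}. tr a \<times> tr (m-a)) \<subseteq> tr (Suc m)"
      unfolding tr_def by auto
    show "tr (Suc m) \<subseteq> (\<lambda>(a,l,r). Node l () r) ` (SIGMA a:{..m}. tr a \<times> tr (m-a))"
    proof
      fix T assume "T \<in> tr (Suc m)"
      then have sT: "size T = Suc m" unfolding tr_def by simp
      then obtain l u r where T: "T = Node l u r" by (cases T) auto
      have "size l + size r = m" using sT T by simp
      then have "(size l, l, r) \<in> (SIGMA a:{..m}. tr a \<times> tr (m-a))" unfolding tr_def by auto
      moreover have "T = (\<lambda>(a,l,r). Node l () r) (size l, l, r)" using T by simp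
      ultimately show "T \<in> (\<lambda>(a,l,r). Node l () r) ` (SIGMA a:{..m}. tr a \<times> tr (m-a))" by blast
    qed
  qed
qed

lemma finite_tr: "finite (tr m)"
proof (induction m rule: less_induct)
  case (less m)
  show ?case
  proof (cases m)
    case 0 then show ?thesis by (simp add: tr0)
  next
    case (Suc m')
    have "finite (SIGMA a:{..m'}. tr a \<times> tr (m'-a))" using less Suc by auto
    then show ?thesis using bij_betw_finite[OF bij_tr] Suc by blast
  qed
qed

lemma sum_tr: "(\<Sum>T\<in>tr (Suc m). ws s T) = (\<Sum>a\<le>m. (\<Sum>l\<in>tr a. ws 0 l) * (\<Sum>r\<in>tr (m-a). ws (Suc s) r))"
proof -
  have "(\<Sum>T\<in>tr (Suc m). ws s T) = (\<Sum>x\<in>(SIGMA a:{..m}. tr a \<times> tr (m-a)). ws s ((\<lambda>(a,l,r). Node l () r) x))"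
    by (rule sum.reindex_bij_betw[OF bij_tr, symmetric])
  also have "\<dots> = (\<Sum>(a,p)\<in>(SIGMA a:{..m}. tr a \<times> tr (m-a)). ws 0 (fst p) * ws (Suc s) (snd p))"
    by (rule sum.cong) (auto split: prod.split)
  also have "\<dots> = (\<Sum>a\<le>m. \<Sum>p\<in>tr a \<times> tr (m-a). ws 0 (fst p) * ws (Suc s) (snd p))"
    by (rule sum.Sigma[symmetric]) (auto simp: finite_tr)
  also have "\<dots> = (\<Sum>a\<le>m. (\<Sum>l\<in>tr a. ws 0 l) * (\<Sum>r\<in>tr (m-a). ws (Suc s) r))"
  proof (rule sum.cong[OF refl])
    fix a
    have "(\<Sum>l\<in>tr a. ws 0 l) * (\<Sum>r\<in>tr (m-a). ws (Suc s) r) = (\<Sum>l\<in>tr a. \<Sum>r\<in>tr (m-a). ws 0 l * ws (Suc s) r)"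
      by (rule sum_product)
    also have "\<dots> = (\<Sum>(l,r)\<in>tr a \<times> tr (m-a). ws 0 l * ws (Suc s) r)" by (rule sum.cartesian_product)
    also have "\<dots> = (\<Sum>p\<in>tr a \<times> tr (m-a). ws 0 (fst p) * ws (Suc s) (snd p))" by (simp add: case_prod_beta')
    finally show "(\<Sum>p\<in>tr a \<times> tr (m-a). ws 0 (fst p) * ws (Suc s) (snd p)) = (\<Sum>l\<in>tr a. ws 0 l) * (\<Sum>r\<in>tr (m-a). ws (Suc s) r)" by simp
  qed
  finally show ?thesis .
qed

definition Pf :: "int poly fps" where "Pf = Abs_fps (\<lambda>m. \<Sum>T\<in>tr m. ws 0 T)"
definition Qf :: "int poly fps" where "Qf = Abs_fps (\<lambda>m. \<Sum>T\<in>tr m. ws (Suc 0) T)"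
definition Rf :: "int poly fps" where "Rf = Abs_fps (\<lambda>m. \<Sum>T\<in>tr m. ws (Suc (Suc 0)) T)"

lemma conv2: "(F * G) $ m = (\<Sum>a\<le>m. F $ a * G $ (m-a))"
  by (simp add: fps_mult_nth atLeast0AtMost)

lemma Peq: "Pf = 1 + fps_X * (Pf * Qf)"
proof (rule fps_ext)
  fix m show "Pf $ m = (1 + fps_X * (Pf * Qf)) $ m"
  proof (cases m)
    case 0 then show ?thesis by (simp add: Pf_def tr0 fw_def)
  next
    case (Suc m')
    have "Pf $ Suc m' = (\<Sum>a\<le>m'. Pf $ a * Qf $ (m'-a))" unfolding Pf_def Qf_def by (simp only: fps_nth_Abs_fps sum_tr)
    also have "\<dots> = (Pf * Qf) $ m'" by (simp only: conv2)
    finally show ?thesis using Suc by simp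
  qed
qed

lemma Qeq: "Qf = fps_const [:1,1:] + fps_X * (Pf * Rf)"
proof (rule fps_ext)
  fix m show "Qf $ m = (fps_const [:1,1:] + fps_X * (Pf * Rf)) $ m"
  proof (cases m)
    case 0 then show ?thesis by (simp add: Qf_def tr0 fw_def)
  next
    case (Suc m')
    have "Qf $ Suc m' = (\<Sum>a\<le>m'. Pf $ a * Rf $ (m'-a))" unfolding Pf_def Qf_def Rf_def by (simp only: fps_nth_Abs_fps sum_tr)
    also have "\<dots> = (Pf * Rf) $ m'" by (simp only: conv2)
    finally show ?thesis using Suc by simp
  qed
qed

lemma Req: "Rf = fps_const [:0,1:] * Pf + fps_const [:0,1:]"
proof (rule fps_ext)
  fix m
  have "(\<Sum>T\<in>tr m. ws (Suc (Suc 0)) T) = (\<Sum>T\<in>tr m. [:0,1:] * ws 0 T + (if T = Leaf then [:0,1:] else 0))"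
    by (simp add: ws2)
  also have "\<dots> = [:0,1:] * (\<Sum>T\<in>tr m. ws 0 T) + (\<Sum>T\<in>tr m. (if T = Leaf then [:0,1:] else 0))"
    by (simp add: sum.distrib sum_distrib_left)
  also have "(\<Sum>T\<in>tr m. (if T = Leaf then [:0,1:] else 0)) = (if m = 0 then [:0,1:] else 0)"
  proof (cases "m = 0")
    case True then show ?thesis by (simp add: tr0)
  next
    case False
    then have "\<forall>T\<in>tr m. T \<noteq> Leaf" unfolding tr_def by auto
    then show ?thesis using False by simp
  qed
  finally show "Rf $ m = (fps_const [:0,1:] * Pf + fps_const [:0,1:]) $ m" unfolding Rf_def Pf_def by simp
qed

lemma P_eq: "fps_X * Pf = fps_X + (1 + fps_const [:0,1:]) * fps_X * (fps_X * Pf) + fps_const [:0,1:] * fps_X * (fps_X * Pf)^2 + fps_const [:0,1:] * (fps_X * Pf)^3"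
proof -
  have "fps_X * Pf = fps_X * (1 + fps_X * (Pf * (fps_const [:1,1:] + fps_X * (Pf * (fps_const [:0,1:] * Pf + fps_const [:0,1:])))))"
    using Peq Qeq Req by metis
  moreover have "fps_const [:1,1:] = (1 + fps_const [:0,1:] :: int poly fps)"
    by (rule fps_ext) (simp add: one_pCons)
  ultimately show ?thesis by (simp only:) algebra
qed

lemma uniq:
  fixes F G :: "int poly fps" and T :: "int poly fps"
  assumes "F $ 0 = 0" "G $ 0 = 0" "T $ 0 = 0 \<or> True"
    and "F = fps_X + (1 + T) * fps_X * F + T * fps_X * F^2 + T * F^3"
    and "G = fps_X + (1 + T) * fps_X * G + T * fps_X * G^2 + T * G^3"
  shows "F = G"
proof -
  define E where "E = (1 + T) * fps_X + T * fps_X * (F + G) + T * (F*F + F*G + G*G)"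
  have "F - G = (fps_X + (1 + T) * fps_X * F + T * fps_X * F^2 + T * F^3) - (fps_X + (1 + T) * fps_X * G + T * fps_X * G^2 + T * G^3)"
    using assms(4,5) by simp
  also have "\<dots> = (F - G) * E" unfolding E_def by algebra
  finally have "(F - G) * (1 - E) = 0" by (simp add: algebra_simps)
  moreover have "(1 - E) $ 0 = 1" unfolding E_def using assms(1,2) by simp
  then have "1 - E \<noteq> 0" by auto
  ultimately have "F - G = 0" by simp
  then show ?thesis by simp
qed

lemma main_poly:
  assumes "n \<ge> 1" shows "pol (sep_perms n) = (\<Sum>T\<in>tr (n-1). ws 0 T)"
proof -
  have "Af = fps_X * Pf"
    by (rule uniq[OF _ _ _ A_eq P_eq]) (simp_all add: Af_def)
  then have "Af $ n = (fps_X * Pf) $ n" by simp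
  then show ?thesis using assms by (simp add: Af_def Pf_def)
qed


lemma chain_prod:
  assumes "\<forall>x\<in>set xs. 1 \<le> x"
  shows "\<exists>e. sum_list xs = length (filter odd xs) + 2*e \<and>
    prod_list (map fw xs) = smult (2^length (filter even xs)) ([:0,1:]^e * [:1,1:]^length (filter odd xs))"
  using assms
proof (induction xs)
  case Nil then show ?case by simp
next
  case (Cons x xs)
  then obtain e where e: "sum_list xs = length (filter odd xs) + 2*e"
    "prod_list (map fw xs) = smult (2^length (filter even xs)) ([:0,1:]^e * [:1,1:]^length (filter odd xs))" by auto
  have x1: "1 \<le> x" using Cons.prems by simp
  show ?case
  proof (cases "odd x")
    case True
    then obtain d where d: "x = 2*d + 1" by (metis oddE)
    have fx: "fw x = [:0,1:]^d * [:1,1:]" unfolding fw_def using d by simp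
    show ?thesis
    proof (intro exI[of _ "d + e"] conjI)
      show "sum_list (x # xs) = length (filter odd (x # xs)) + 2 * (d + e)" using e(1) d True by simp
      show "prod_list (map fw (x # xs)) = smult (2 ^ length (filter even (x # xs)))
        ([:0, 1:] ^ (d + e) * [:1, 1:] ^ length (filter odd (x # xs)))"
        using True e(2) fx by (simp add: power_add algebra_simps)
    qed
  next
    case False
    then obtain d where d: "x = 2*d" by (metis evenE)
    have "d \<noteq> 0" using d x1 by auto
    then have fx: "fw x = smult 2 ([:0,1:]^d)" unfolding fw_def using d False by simp
    show ?thesis
    proof (intro exI[of _ "d + e"] conjI)
      show "sum_list (x # xs) = length (filter odd (x # xs)) + 2 * (d + e)" using e(1) d False by simp
      show "prod_list (map fw (x # xs)) = smult (2 ^ length (filter even (x # xs)))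
        ([:0, 1:] ^ (d + e) * [:1, 1:] ^ length (filter odd (x # xs)))"
        using False e(2) fx by (simp add: power_add algebra_simps)
    qed
  qed
qed

lemma chains_sum: "sum_list (chains b T) + (if b then 0 else rlen T) = size T"
proof (induction T arbitrary: b)
  case Leaf then show ?case by simp
next
  case (Node l x r)
  have "sum_list (chains True l) = size l" using Node.IH(1)[of True] by simp
  moreover have "sum_list (chains False r) + rlen r = size r" using Node.IH(2)[of False] by simp
  ultimately show ?case by auto
qed

lemma chains_pos: "\<forall>x\<in>set (chains b T). 1 \<le> x"
  by (induction T arbitrary: b) auto

lemma ws0_form:
  "\<exists>e. size T = r_o T + 2*e \<and> ws 0 T = smult (2^r_e T) ([:0,1:]^e * [:1,1:]^r_o T)"
proof -
  obtain e where e: "sum_list (chains True T) = length (filter odd (chains True T)) + 2*e"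
    "prod_list (map fw (chains True T)) = smult (2^length (filter even (chains True T))) ([:0,1:]^e * [:1,1:]^length (filter odd (chains True T)))"
    using chain_prod[OF chains_pos[of True T]] by blast
  have "size T = sum_list (chains True T)" using chains_sum[of True T] by simp
  then show ?thesis using e ws0[of T] unfolding r_o_def r_e_def by auto
qed

lemma indep:
  fixes c :: "nat \<Rightarrow> int"
  assumes "(\<Sum>k\<le>K. smult (c k) ([:0,1:]^k * [:1,1:]^(N - 2*k))) = 0"
  shows "\<forall>k\<le>K. c k = 0"
proof (rule ccontr)
  assume "\<not> (\<forall>k\<le>K. c k = 0)"
  then have ex: "\<exists>k. k \<le> K \<and> c k \<noteq> 0" by auto
  define m where "m = (LEAST k. k \<le> K \<and> c k \<noteq> 0)"
  have m: "m \<le> K" "c m \<noteq> 0" using LeastI_ex[OF ex] unfolding m_def by auto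
  have lt: "k < m \<Longrightarrow> c k = 0" for k using not_less_Least[of k "\<lambda>k. k \<le> K \<and> c k \<noteq> 0"] m unfolding m_def by auto
  have cf: "coeff (smult (c k) ([:0,1:]^k * [:1,1:]^(N - 2*k))) m = (if k = m then c m else 0)" if "k \<le> K" for k
  proof -
    have "coeff (smult (c k) ([:0,1:]^k * [:1,1:]^(N - 2*k))) m = c k * coeff (monom 1 k * [:1,1:]^(N - 2*k)) m"
      by (simp add: monom_altdef)
    also have "\<dots> = c k * (if m < k then 0 else coeff ([:1,1:]^(N - 2*k)) (m - k))"
      by (simp add: coeff_monom_mult)
    also have "\<dots> = (if k = m then c m else 0)"
    proof (cases "k < m")
      case True then show ?thesis using lt by simp
    next
      case False
      then show ?thesis by (cases "k = m") (auto simp: coeff_0_power)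
    qed
    finally show ?thesis .
  qed
  have "0 = coeff (\<Sum>k\<le>K. smult (c k) ([:0,1:]^k * [:1,1:]^(N - 2*k))) m" using assms by simp
  also have "\<dots> = (\<Sum>k\<le>K. coeff (smult (c k) ([:0,1:]^k * [:1,1:]^(N - 2*k))) m)" by (rule coeff_sum)
  also have "\<dots> = (\<Sum>k\<le>K. (if k = m then c m else 0))" using cf by (intro sum.cong) auto
  also have "\<dots> = c m" using m(1) by simp
  finally show False using m(2) by simp
qed

lemma tree_sum:
  assumes "n \<ge> 1"
  shows "(\<Sum>T\<in>tr (n-1). ws 0 T) = (\<Sum>k\<le>(n - 1) div 2.
     smult (\<Sum>T\<in>{T \<in> btrees n. r_o T = n - 1 - 2 * k}. (2::int) ^ r_e T) ([:0, 1:] ^ k * [:1, 1:] ^ (n - 1 - 2 * k)))"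
proof -
  define S where "S = btrees n"
  have St: "S = tr (n-1)" unfolding S_def btrees_def tr_def by simp
  have fS: "finite S" using finite_tr St by simp
  define g where "g T = (n - 1 - r_o T) div 2" for T
  have form: "size T = r_o T + 2 * g T \<and> ws 0 T = smult (2^r_e T) ([:0,1:]^g T * [:1,1:]^r_o T)" if "T \<in> S" for T
  proof -
    obtain e where e: "size T = r_o T + 2*e" "ws 0 T = smult (2^r_e T) ([:0,1:]^e * [:1,1:]^r_o T)"
      using ws0_form by blast
    have "size T = n - 1" using that unfolding S_def btrees_def by simp
    then have "g T = e" unfolding g_def using e(1) by simp
    then show ?thesis using e by simp
  qed
  have gS: "g ` S \<subseteq> {..(n-1) div 2}"
  proof
    fix k assume "k \<in> g ` S"
    then obtain T where T: "T \<in> S" "k = g T" by auto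
    then have "size T = n - 1" unfolding S_def btrees_def by simp
    then show "k \<in> {..(n-1) div 2}" using form[OF T(1)] T(2) by auto
  qed
  have setq: "{T \<in> S. r_o T = n - 1 - 2 * k} = {T \<in> S. g T = k}" if "k \<le> (n-1) div 2" for k
  proof -
    have "r_o T = n - 1 - 2 * k \<longleftrightarrow> g T = k" if "T \<in> S" for T
    proof -
      have "size T = n - 1" using that unfolding S_def btrees_def by simp
      then have "n - 1 = r_o T + 2 * g T" using form[OF that] by simp
      then show ?thesis using \<open>k \<le> (n-1) div 2\<close> by auto
    qed
    then show ?thesis by blast
  qed
  have "(\<Sum>k\<le>(n - 1) div 2.
     smult (\<Sum>T\<in>{T \<in> S. r_o T = n - 1 - 2 * k}. (2::int) ^ r_e T) ([:0, 1:] ^ k * [:1, 1:] ^ (n - 1 - 2 * k)))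
   = (\<Sum>k\<le>(n - 1) div 2. \<Sum>T\<in>{T \<in> S. g T = k}. smult ((2::int) ^ r_e T) ([:0, 1:] ^ k * [:1, 1:] ^ (n - 1 - 2 * k)))"
  proof (rule sum.cong[OF refl])
    fix k assume k: "k \<in> {..(n-1) div 2}"
    have sq: "{T \<in> S. r_o T = n - 1 - 2 * k} = {T \<in> S. g T = k}" using setq k by simp
    show "smult (\<Sum>T\<in>{T \<in> S. r_o T = n - 1 - 2 * k}. (2::int) ^ r_e T) ([:0, 1:] ^ k * [:1, 1:] ^ (n - 1 - 2 * k))
      = (\<Sum>T\<in>{T \<in> S. g T = k}. smult ((2::int) ^ r_e T) ([:0, 1:] ^ k * [:1, 1:] ^ (n - 1 - 2 * k)))"
      unfolding sq by (rule smult_sum)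
  qed
  also have "\<dots> = (\<Sum>k\<le>(n - 1) div 2. \<Sum>T\<in>{T \<in> S. g T = k}. ws 0 T)"
  proof (intro sum.cong refl)
    fix k T assume "T \<in> {T \<in> S. g T = k}"
    then have T: "T \<in> S" "g T = k" by auto
    have "size T = n - 1" using T unfolding S_def btrees_def by simp
    then have "r_o T = n - 1 - 2 * k" using form[OF T(1)] T(2) by simp
    then show "smult ((2::int) ^ r_e T) ([:0, 1:] ^ k * [:1, 1:] ^ (n - 1 - 2 * k)) = ws 0 T"
      using form[OF T(1)] T(2) by simp
  qed
  also have "\<dots> = (\<Sum>T\<in>S. ws 0 T)" by (rule sum.group[OF fS _ gS]) simp
  finally show ?thesis unfolding St[symmetric] S_def by simp
qed

theorem theorem5p7:
  fixes n :: nat and \<gamma> :: "nat \<Rightarrow> int"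
  assumes "n \<ge> 1"
    and "(\<Sum>\<pi>\<in>sep_perms n. monom (1::int) (des \<pi>)) =
         (\<Sum>k\<le>(n - 1) div 2. smult (\<gamma> k) ([:0, 1:] ^ k * [:1, 1:] ^ (n - 1 - 2 * k)))"
  shows "\<forall>k\<le>(n - 1) div 2.
           \<gamma> k = (\<Sum>T\<in>{T \<in> btrees n. r_o T = n - 1 - 2 * k}. (2::int) ^ r_e T)"
proof -
  define \<gamma>' where "\<gamma>' k = (\<Sum>T\<in>{T \<in> btrees n. r_o T = n - 1 - 2 * k}. (2::int) ^ r_e T)" for k
  have "(\<Sum>k\<le>(n - 1) div 2. smult (\<gamma> k) ([:0, 1:] ^ k * [:1, 1:] ^ (n - 1 - 2 * k)))
      = (\<Sum>k\<le>(n - 1) div 2. smult (\<gamma>' k) ([:0, 1:] ^ k * [:1, 1:] ^ (n - 1 - 2 * k)))"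
    using assms(2) main_poly[OF assms(1)] tree_sum[OF assms(1)] unfolding pol_def \<gamma>'_def by simp
  then have "(\<Sum>k\<le>(n - 1) div 2. smult (\<gamma> k - \<gamma>' k) ([:0, 1:] ^ k * [:1, 1:] ^ (n - 1 - 2 * k))) = 0"
    by (simp add: smult_diff_left sum_subtractf)
  then have "\<forall>k\<le>(n - 1) div 2. \<gamma> k - \<gamma>' k = 0" by (rule indep)
  then show ?thesis unfolding \<gamma>'_def by simp
qed


end
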